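(* Let $R \subseteq \mathbb{N}=\{1,2,\dots\}$. The infinite matrices $[{n \brace k}_R]_{n,k\ge1}$, $[{n \brack k}_R]_{n,k\ge1}$ and $[L(n,k)_R]_{n,k\ge1}$ are invertible if and only if $1 \in R$. Moreover, for every $R$ with $1\in R$ and all $n,k\ge 1$, $$ {n \brace k}^{-1}_{R} = (-1)^{n-k} \left(\left|\mathcal F^{\rm i.o., even}_R(n,k)\right|-\left|\mathcal F^{\rm i.o., odd}_{R}(n,k)\right|\right),$$ $$ {n \brack k}^{-1}_{R} = (-1)^{n-k} \left(\left|\mathcal F^{\rm m.o., even}_R(n,k)\right|-\left|\mathcal F^{\rm m.o., odd}_{R}(n,k)\right|\right),$$ $$ L(n,k)^{-1}_{R} = (-1)^{n-k} \left(\left|\mathcal F^{\rm l.o., even}_R(n,k)\right|-\left|\mathcal F^{\rm l.o., odd}_{R}(n,k)\right|\right).$$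
   Context: For $R\subseteq\mathbb N$: ${n \brace k}_R$ is the number of partitions of $[n]=\{1,\dots,n\}$ into $k$ (unordered) nonempty blocks each of cardinality in $R$; ${n \brack k}_R$ is the number of partitions of $[n]$ into $k$ cycles (cyclically ordered nonempty blocks) each of size in $R$; $L(n,k)_R$ is the number of partitions of $[n]$ into $k$ lists (linearly ordered nonempty blocks) each of size in $R$. Rows are indexed by $n$, columns by $k$. When the inverse exists, ${n \brace k}^{-1}_R$, ${n \brack k}^{-1}_R$, $L(n,k)^{-1}_R$ denote the $(n,k)$ entries of $[{n \brace k}_R]^{-1}_{n,k\ge1}$, $[{n \brack k}_R]^{-1}_{n,k\ge1}$, $[L(n,k)_R]^{-1}_{n,k\ge1}$ respectively. Trees are rooted; a forest is an unordered collection of rooted trees. The down-degree $d(v)$ of a vertex is its number of children; a leaf is a vertex with $d(v)=0$ (an isolated root is a leaf). A phylogenetic forest with $n$ leaves is a rooted forest with unordered children, no vertex of down-degree $1$, together with a bijective labeling of its leaves by $[n]$. For a vertex $v$, $\ell_{\max}(v)$ (resp. $\ell_{\min}(v)$) is the maximum (resp. minimum) leaf label among leaves descended from $v$ (including $v$ itself if it is a leaf). A phylogenetic forest is linearly ordered if each full set of children of a non-leaf vertex is given a linear order (left to right); increasingly ordered if linearly ordered and in each sibling set $\ell_{\max}$ increases from left to right; min-first ordered if linearly ordered and in each sibling set the left-most sibling has the smallest $\ell_{\min}$ among the siblings. $\mathcal F^{\rm i.o.}(n,k)$, $\mathcal F^{\rm m.o.}(n,k)$, $\mathcal F^{\rm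 l.o.}(n,k)$ denote the increasingly, min-first, linearly ordered phylogenetic forests with $n$ leaves and $k$ components; a subscript $R$ restricts to forests all of whose nonzero down-degrees lie in $R$. A forest is even (odd) if its number of edges is even (odd); superscripts "even"/"odd" restrict accordingly. *)

theory Defs
  imports Complex_Main "HOL-Library.Disjoint_Sets" "HOL-Combinatorics.Permutations"
begin

definition stirling2_R :: "nat set \<Rightarrow> nat \<Rightarrow> nat \<Rightarrow> nat" where
  "stirling2_R R n k = card {P. partition_on {1..n} P \<and> card P = k \<and> (\<forall>b\<in>P. card b \<in> R)}"

definition cyc_orbit :: "(nat \<Rightarrow> nat) \<Rightarrow> nat \<Rightarrow> nat set" where
  "cyc_orbit \<sigma> x = range (\<lambda>i. (\<sigma> ^^ i) x)"

text \<open>Partitions of [n] into k cycles (a permutation of [n] = a set of disjoint cycles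
  covering [n]), each cycle of size in R.\<close>
definition stirling1_R :: "nat set \<Rightarrow> nat \<Rightarrow> nat \<Rightarrow> nat" where
  "stirling1_R R n k = card {\<sigma>. \<sigma> permutes {1..n} \<and> card (cyc_orbit \<sigma> ` {1..n}) = k
       \<and> (\<forall>b \<in> cyc_orbit \<sigma> ` {1..n}. card b \<in> R)}"

definition lah_R :: "nat set \<Rightarrow> nat \<Rightarrow> nat \<Rightarrow> nat" where
  "lah_R R n k = card {Ls :: nat list set. finite Ls \<and> card Ls = k
       \<and> (\<forall>l\<in>Ls. l \<noteq> [] \<and> distinct l \<and> length l \<in> R)
       \<and> (\<forall>l\<in>Ls. \<forall>l'\<in>Ls. l \<noteq> l' \<longrightarrow> set l \<inter> set l' = {})
       \<and> (\<Union>l\<in>Ls. set l) = {1..n}}"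

definition lower_tri :: "(nat \<Rightarrow> nat \<Rightarrow> real) \<Rightarrow> bool" where
  "lower_tri M \<longleftrightarrow> (\<forall>n k. 1 \<le> n \<longrightarrow> n < k \<longrightarrow> M n k = 0)"

text \<open>B is a (two-sided) inverse of A in the algebra of lower triangular matrices indexed
  by n, k \<ge> 1; for lower triangular matrices the product sums are finite.\<close>
definition is_inverse_mat :: "(nat \<Rightarrow> nat \<Rightarrow> real) \<Rightarrow> (nat \<Rightarrow> nat \<Rightarrow> real) \<Rightarrow> bool" where
  "is_inverse_mat A B \<longleftrightarrow> lower_tri A \<and> lower_tri B
     \<and> (\<forall>n k. 1 \<le> n \<longrightarrow> 1 \<le> k \<longrightarrow> (\<Sum>j=1..n. A n j * B j k) = (if n = k then 1 else 0))
     \<and> (\<forall>n k. 1 \<le> n \<longrightarrow> 1 \<le> k \<longrightarrow> (\<Sum>j=1..n. B n j * A j k) = (if n = k then 1 else 0))"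

definition mat_invertible :: "(nat \<Rightarrow> nat \<Rightarrow> real) \<Rightarrow> bool" where
  "mat_invertible A \<longleftrightarrow> (\<exists>B. is_inverse_mat A B)"

datatype ptree = Leaf nat | Node "ptree list"

primrec leaves :: "ptree \<Rightarrow> nat list" where
  "leaves (Leaf i) = [i]"
| "leaves (Node ts) = concat (map leaves ts)"

primrec subtrees :: "ptree \<Rightarrow> ptree list" where
  "subtrees (Leaf i) = [Leaf i]"
| "subtrees (Node ts) = Node ts # concat (map subtrees ts)"

text \<open>Number of edges = sum of down-degrees.\<close>
primrec edges :: "ptree \<Rightarrow> nat" where
  "edges (Leaf i) = 0"
| "edges (Node ts) = length ts + sum_list (map edges ts)"

definition lmax :: "ptree \<Rightarrow> nat" where "lmax t = Max (set (leaves t))"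
definition lmin :: "ptree \<Rightarrow> nat" where "lmin t = Min (set (leaves t))"

text \<open>Phylogenetic condition (no internal vertex of down-degree 0 or 1) together with
  all nonzero down-degrees in R.\<close>
definition phylo_R :: "nat set \<Rightarrow> ptree \<Rightarrow> bool" where
  "phylo_R R t \<longleftrightarrow> (\<forall>ts. Node ts \<in> set (subtrees t) \<longrightarrow> 2 \<le> length ts \<and> length ts \<in> R)"

definition incr_ordered :: "ptree \<Rightarrow> bool" where
  "incr_ordered t \<longleftrightarrow> (\<forall>ts. Node ts \<in> set (subtrees t) \<longrightarrow> sorted_wrt (<) (map lmax ts))"

definition minfirst_ordered :: "ptree \<Rightarrow> bool" where
  "minfirst_ordered t \<longleftrightarrow> (\<forall>s ts. Node (s # ts) \<in> set (subtrees t) \<longrightarrow> (\<forall>s'\<in>set ts. lmin s < lmin s'))"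

text \<open>Linearly ordered phylogenetic forests with n leaves, k components, down-degrees in R:
  an unordered (finite) set of ordered trees whose leaves are bijectively labelled by [n].\<close>
definition lo_forests :: "nat set \<Rightarrow> nat \<Rightarrow> nat \<Rightarrow> ptree set set" where
  "lo_forests R n k = {F. finite F \<and> card F = k
      \<and> (\<forall>t\<in>F. phylo_R R t \<and> distinct (leaves t))
      \<and> (\<forall>t\<in>F. \<forall>t'\<in>F. t \<noteq> t' \<longrightarrow> set (leaves t) \<inter> set (leaves t') = {})
      \<and> (\<Union>t\<in>F. set (leaves t)) = {1..n}}"

definition io_forests :: "nat set \<Rightarrow> nat \<Rightarrow> nat \<Rightarrow> ptree set set" where
  "io_forests R n k = {F \<in> lo_forests R n k. \<forall>t\<in>F. incr_ordered t}"

definition mo_forests :: "nat set \<Rightarrow> nat \<Rightarrow> nat \<Rightarrow> ptree set set" where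
  "mo_forests R n k = {F \<in> lo_forests R n k. \<forall>t\<in>F. minfirst_ordered t}"

definition forest_edges :: "ptree set \<Rightarrow> nat" where
  "forest_edges F = (\<Sum>t\<in>F. edges t)"

definition even_minus_odd :: "ptree set set \<Rightarrow> real" where
  "even_minus_odd \<F> = real (card {F\<in>\<F>. even (forest_edges F)}) - real (card {F\<in>\<F>. odd (forest_edges F)})"

end

theory Submission
  imports Defs "HOL-Combinatorics.Cycles"
begin


definition mm :: "(nat \<Rightarrow> nat \<Rightarrow> real) \<Rightarrow> (nat \<Rightarrow> nat \<Rightarrow> real) \<Rightarrow> nat \<Rightarrow> nat \<Rightarrow> real" where
  "mm X Y n k = (\<Sum>j=1..n. X n j * Y j k)"

lemma ext_sum:
  assumes "lower_tri X" "1 \<le> i" "i \<le> n"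
  shows "(\<Sum>j=1..i. X i j * Y j k) = (\<Sum>j=1..n. X i j * Y j k)"
proof (rule sum.mono_neutral_left)
  show "\<forall>j\<in>{1..n} - {1..i}. X i j * Y j k = 0" using assms unfolding lower_tri_def by auto
qed (use assms in auto)

lemma mm_assoc:
  assumes "lower_tri X" "lower_tri Y"
  shows "mm (mm X Y) Z n k = mm X (mm Y Z) n k"
proof -
  have "mm (mm X Y) Z n k = (\<Sum>j=1..n. \<Sum>i=1..n. X n i * Y i j * Z j k)"
    unfolding mm_def by (simp add: sum_distrib_right)
  also have "\<dots> = (\<Sum>i=1..n. \<Sum>j=1..n. X n i * Y i j * Z j k)" by (rule sum.swap)
  also have "\<dots> = (\<Sum>i=1..n. X n i * (\<Sum>j=1..i. Y i j * Z j k))"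
  proof (rule sum.cong)
    fix i assume i: "i \<in> {1..n}"
    have "(\<Sum>j=1..i. Y i j * Z j k) = (\<Sum>j=1..n. Y i j * Z j k)"
      using ext_sum[OF assms(2)] i by auto
    then show "(\<Sum>j=1..n. X n i * Y i j * Z j k) = X n i * (\<Sum>j=1..i. Y i j * Z j k)"
      by (simp add: sum_distrib_left mult.assoc)
  qed simp
  finally show ?thesis unfolding mm_def by simp
qed

lemma mm_lower: "lower_tri Y \<Longrightarrow> lower_tri (mm X Y)"
  unfolding lower_tri_def mm_def by (auto intro!: sum.neutral)

lemma mm_delta_right:
  assumes "lower_tri C" "\<And>j. 1 \<le> j \<Longrightarrow> D j k = (if j = k then 1 else 0)" "1 \<le> n" "1 \<le> k"
  shows "mm C D n k = C n k"
proof (cases "k \<le> n")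
  case True
  have "mm C D n k = (\<Sum>j\<in>{1..n}. if j = k then C n j else 0)"
    unfolding mm_def by (rule sum.cong) (use assms in auto)
  also have "\<dots> = C n k" using True assms by (simp add: sum.delta)
  finally show ?thesis .
next
  case False
  then show ?thesis using assms unfolding mm_def lower_tri_def by (auto intro!: sum.neutral)
qed

lemma mm_delta_left:
  assumes "\<And>j. 1 \<le> j \<Longrightarrow> D n j = (if n = j then 1 else 0)" "1 \<le> n" 
  shows "mm D C n k = C n k"
proof -
  have "mm D C n k = (\<Sum>j\<in>{1..n}. if j = n then C j k else 0)"
    unfolding mm_def by (rule sum.cong) (use assms in auto)
  also have "\<dots> = C n k" using assms by (simp add: sum.delta)
  finally show ?thesis .
qed

lemma left_inv_is_inverse:
  assumes A: "lower_tri A" and C: "lower_tri C"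
    and L: "\<And>n k. 1 \<le> n \<Longrightarrow> 1 \<le> k \<Longrightarrow> mm C A n k = (if n = k then 1 else 0)"
  shows "is_inverse_mat A C"
proof -
  have diag: "C n n * A n n = 1" if "1 \<le> n" for n
  proof -
    have "mm C A n n = C n n * A n n"
    proof -
      have "mm C A n n = (\<Sum>j\<in>{1..n}. if j = n then C n j * A j n else 0)"
        unfolding mm_def by (rule sum.cong) (use A in \<open>auto simp: lower_tri_def\<close>)
      then show ?thesis using that by (simp add: sum.delta)
    qed
    with L[OF that that] show ?thesis by simp
  qed
  define E where "E n k = mm A C n k - (if n = k then 1 else 0)" for n k
  have E0: "\<forall>k. 1 \<le> k \<longrightarrow> E n k = 0" if "1 \<le> n" for n
    using that
  proof (induction n rule: less_induct)
    case (less n)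
    show ?case
    proof (intro allI impI)
      fix k :: nat assume k: "1 \<le> k"
      have "mm C (mm A C) n k = mm (mm C A) C n k" using mm_assoc[OF C A] by simp
      also have "\<dots> = C n k" by (rule mm_delta_left) (use L less.prems in auto)
      finally have e1: "mm C (mm A C) n k = C n k" .
      have "mm C (mm A C) n k = mm C E n k + mm C (\<lambda>j k. if j = k then 1 else 0) n k"
        unfolding mm_def E_def by (simp add: sum.distrib[symmetric] algebra_simps)
      also have "mm C (\<lambda>j k. if j = k then 1 else 0) n k = C n k"
        by (rule mm_delta_right) (use C less.prems k in auto)
      finally have "mm C E n k = 0" using e1 by simp
      moreover have "mm C E n k = C n n * E n k"
      proof -
        have "mm C E n k = (\<Sum>j\<in>{1..n}. if j = n then C n j * E j k else 0)"
          unfolding mm_def by (rule sum.cong) (use less k in auto)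
        then show ?thesis using less.prems by (simp add: sum.delta)
      qed
      ultimately show "E n k = 0" using diag[OF less.prems] by auto
    qed
  qed
  show ?thesis unfolding is_inverse_mat_def
    using A C L E0 unfolding E_def mm_def by auto
qed

lemma inverse_unique:
  assumes "is_inverse_mat A B" "lower_tri C"
    and L: "\<And>n k. 1 \<le> n \<Longrightarrow> 1 \<le> k \<Longrightarrow> mm C A n k = (if n = k then 1 else 0)"
    and "1 \<le> n" "1 \<le> k"
  shows "B n k = C n k"
proof -
  have A: "lower_tri A" and R: "\<And>n k. 1 \<le> n \<Longrightarrow> 1 \<le> k \<Longrightarrow> mm A B n k = (if n = k then 1 else 0)"
    using assms(1) unfolding is_inverse_mat_def mm_def by auto
  have "C n k = mm C (mm A B) n k" by (rule mm_delta_right[symmetric]) (use assms R in auto)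
  also have "\<dots> = mm (mm C A) B n k" using mm_assoc[OF assms(2) A] by simp
  also have "\<dots> = B n k" by (rule mm_delta_left) (use L assms in auto)
  finally show ?thesis by simp
qed



definition Qk :: "nat \<Rightarrow> ('a \<Rightarrow> 'a \<Rightarrow> bool) \<Rightarrow> 'a list \<Rightarrow> bool" where
  "Qk \<kappa> lt l = (if \<kappa> = 1 then sorted_wrt lt l else if \<kappa> = 2 then (\<forall>x\<in>set (tl l). lt (hd l) x) else True)"

definition LS :: "nat \<Rightarrow> ('a \<Rightarrow> 'a \<Rightarrow> bool) \<Rightarrow> nat set \<Rightarrow> 'a set \<Rightarrow> nat \<Rightarrow> 'a list set set" where
  "LS \<kappa> lt R X k = {Ls. finite Ls \<and> card Ls = k
       \<and> (\<forall>l\<in>Ls. l \<noteq> [] \<and> distinct l \<and> length l \<in> R \<and> Qk \<kappa> lt l)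
       \<and> (\<forall>l\<in>Ls. \<forall>l'\<in>Ls. l \<noteq> l' \<longrightarrow> set l \<inter> set l' = {})
       \<and> (\<Union>l\<in>Ls. set l) = X}"

lemma lah_LS: "lah_R R n k = card (LS 0 (<) R {1..n} k)"
  unfolding lah_R_def LS_def Qk_def by simp

lemma sorted_wrt_iff_on:
  "(\<forall>x\<in>set l. \<forall>y\<in>set l. P x y \<longleftrightarrow> Q x y) \<Longrightarrow> sorted_wrt P l = sorted_wrt Q l"
  by (induct l) auto

lemma Qk_map:
  assumes "\<forall>x\<in>set l. \<forall>y\<in>set l. lt x y \<longleftrightarrow> lt' (h x) (h y)"
  shows "Qk \<kappa> lt' (map h l) = Qk \<kappa> lt l"
proof -
  have "sorted_wrt lt' (map h l) = sorted_wrt lt l"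
    unfolding sorted_wrt_map using assms
    by (intro sorted_wrt_iff_on) auto
  moreover have "(\<forall>x\<in>set (tl (map h l)). lt' (hd (map h l)) x) = (\<forall>x\<in>set (tl l). lt (hd l) x)"
    using assms by (cases l) auto
  ultimately show ?thesis unfolding Qk_def by simp
qed

lemma LS_map:
  assumes inj: "inj_on h X" and lt: "\<forall>x\<in>X. \<forall>y\<in>X. lt x y \<longleftrightarrow> lt' (h x) (h y)"
    and Ls: "Ls \<in> LS \<kappa> lt R X k"
  shows "image (map h) Ls \<in> LS \<kappa> lt' R (h ` X) k"
proof -
  have sub: "set l \<subseteq> X" if "l \<in> Ls" for l using Ls that unfolding LS_def by auto
  have injm: "inj_on (map h) Ls"
  proof (rule inj_onI)
    fix l l' assume "l \<in> Ls" "l' \<in> Ls" "map h l = map h l'"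
    moreover have "inj_on h (set l \<union> set l')" using sub \<open>l \<in> Ls\<close> \<open>l' \<in> Ls\<close> inj
      by (meson Un_least inj_on_subset)
    ultimately show "l = l'" using inj_on_map_eq_map by blast
  qed
  show ?thesis unfolding LS_def
  proof (intro CollectI conjI ballI impI)
    have L: "finite Ls" "card Ls = k" "(\<Union>l\<in>Ls. set l) = X" using Ls unfolding LS_def by auto
    show "finite (map h ` Ls)" using L(1) by (rule finite_imageI)
    show "card (map h ` Ls) = k" using L(2) card_image[OF injm] by simp
    have "(\<Union>l\<in>map h ` Ls. set l) = (\<Union>l\<in>Ls. h ` set l)" by simp
    also have "\<dots> = h ` (\<Union>l\<in>Ls. set l)" by (rule image_UN[symmetric])
    finally show "(\<Union>l\<in>map h ` Ls. set l) = h ` X" using L(3) by simp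
  next
    fix l' assume "l' \<in> map h ` Ls"
    then obtain l where l: "l \<in> Ls" "l' = map h l" by auto
    have ij: "inj_on h (set l)" using inj sub[OF l(1)] inj_on_subset by blast
    have P: "l \<noteq> []" "distinct l" "length l \<in> R" "Qk \<kappa> lt l" using Ls l(1) unfolding LS_def by auto
    show "l' \<noteq> []" using P l(2) by simp
    show "distinct l'" using P l(2) ij by (simp add: distinct_map)
    show "length l' \<in> R" using P l(2) by simp
    have "\<forall>x\<in>set l. \<forall>y\<in>set l. lt x y \<longleftrightarrow> lt' (h x) (h y)" using lt sub[OF l(1)] by blast
    from Qk_map[of l lt lt' h \<kappa>, OF this] show "Qk \<kappa> lt' l'" using P(4) l(2) by simp
  next
    fix l1 l2 assume "l1 \<in> map h ` Ls" "l2 \<in> map h ` Ls" "l1 \<noteq> l2"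
    then obtain m1 m2 where m: "m1 \<in> Ls" "m2 \<in> Ls" "l1 = map h m1" "l2 = map h m2" "m1 \<noteq> m2" by auto
    then have "set m1 \<inter> set m2 = {}" using Ls unfolding LS_def by auto
    moreover have "h ` (set m1 \<inter> set m2) = h ` set m1 \<inter> h ` set m2"
      by (rule inj_on_image_Int[OF inj sub[OF m(1)] sub[OF m(2)]])
    ultimately show "set l1 \<inter> set l2 = {}" using m(3,4) by (metis image_empty list.set_map)
  qed
qed

lemma LS_transport:
  assumes bij: "bij_betw h X Y" and lt: "\<forall>x\<in>X. \<forall>y\<in>X. lt x y \<longleftrightarrow> lt' (h x) (h y)"
  shows "card (LS \<kappa> lt R X k) = card (LS \<kappa> lt' R Y k)"
proof -
  define g where "g = inv_into X h"
  have bg: "bij_betw g Y X" unfolding g_def by (rule bij_betw_inv_into[OF bij])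
  have gh: "g (h x) = x" if "x \<in> X" for x using bij that unfolding g_def
    by (simp add: bij_betw_inv_into_left)
  have hg: "h (g y) = y" if "y \<in> Y" for y using bij that unfolding g_def
    by (simp add: bij_betw_inv_into_right)
  have lt': "\<forall>x\<in>Y. \<forall>y\<in>Y. lt' x y \<longleftrightarrow> lt (g x) (g y)"
    using lt hg bg by (metis bij_betwE)
  have hX: "h ` X = Y" "g ` Y = X" using bij bg by (auto simp: bij_betw_def)
  show ?thesis
  proof (rule bij_betw_same_card[of "image (map h)"], rule bij_betw_byWitness[where f'="image (map g)"])
    show "\<forall>a\<in>LS \<kappa> lt R X k. map g ` map h ` a = a"
    proof
      fix Ls assume "Ls \<in> LS \<kappa> lt R X k"
      then have "\<forall>l\<in>Ls. set l \<subseteq> X" unfolding LS_def by auto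
      then have "\<forall>l\<in>Ls. map g (map h l) = l" using gh by (auto intro: map_idI simp: subset_iff)
      then show "map g ` map h ` Ls = Ls" by (force simp: image_image)
    qed
    show "\<forall>a\<in>LS \<kappa> lt' R Y k. map h ` map g ` a = a"
    proof
      fix Ls assume "Ls \<in> LS \<kappa> lt' R Y k"
      then have "\<forall>l\<in>Ls. set l \<subseteq> Y" unfolding LS_def by auto
      then have "\<forall>l\<in>Ls. map h (map g l) = l" using hg by (auto intro: map_idI simp: subset_iff)
      then show "map h ` map g ` Ls = Ls" by (force simp: image_image)
    qed
    show "image (map h) ` LS \<kappa> lt R X k \<subseteq> LS \<kappa> lt' R Y k"
      using LS_map[OF bij_betw_imp_inj_on[OF bij] lt] hX by auto
    show "image (map g) ` LS \<kappa> lt' R Y k \<subseteq> LS \<kappa> lt R X k"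
      using LS_map[OF bij_betw_imp_inj_on[OF bg] lt'] hX by auto
  qed
qed

lemma stirling2_LS: "stirling2_R R n k = card (LS 1 (<) R {1..n} k)"
proof -
  let ?P = "{P. partition_on {1..n} P \<and> card P = k \<and> (\<forall>b\<in>P. card b \<in> R)}"
  have "card ?P = card (LS 1 (<) R {1..n} k)"
  proof (rule bij_betw_same_card[of "image sorted_list_of_set"], rule bij_betw_byWitness[where f'="image set"])
    show "\<forall>P\<in>?P. set ` sorted_list_of_set ` P = P"
    proof
      fix P assume "P \<in> ?P"
      then have "\<forall>b\<in>P. finite b" using finite_subset[of _ "{1..n}"]
        by (auto dest!: partition_onD1)
      then show "set ` sorted_list_of_set ` P = P" by (force simp: image_image)
    qed
    show "\<forall>Ls\<in>LS 1 (<) R {1..n} k. sorted_list_of_set ` set ` Ls = Ls"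
    proof
      fix Ls assume "Ls \<in> LS 1 (<) R {1..n} k"
      then have "\<forall>l\<in>Ls. sorted_wrt (<) l" unfolding LS_def Qk_def by auto
      then have "\<forall>l\<in>Ls. sorted_list_of_set (set l) = l"
        by (simp add: sorted_list_of_set_sort_remdups strict_sorted_iff distinct_remdups_id sorted_sort_id)
      then show "sorted_list_of_set ` set ` Ls = Ls" by (force simp: image_image)
    qed
    show "image sorted_list_of_set ` ?P \<subseteq> LS 1 (<) R {1..n} k"
    proof
      fix Ls assume "Ls \<in> image sorted_list_of_set ` ?P"
      then obtain P where P: "P \<in> ?P" "Ls = sorted_list_of_set ` P" by auto
      have fin: "\<forall>b\<in>P. finite b \<and> b \<noteq> {}" using P(1) finite_subset[of _ "{1..n}"]
        by (auto dest: partition_onD1 partition_onD3)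
      have inj: "inj_on sorted_list_of_set P"
        using fin by (intro inj_onI) (metis sorted_list_of_set.set_sorted_key_list_of_set)
      have fP: "finite P" using P(1) finite_elements[of "{1..n}" P] by simp
      show "Ls \<in> LS 1 (<) R {1..n} k" unfolding LS_def Qk_def
      proof (intro CollectI conjI ballI impI)
        show "finite Ls" using P fP by auto
        show "card Ls = k" using P inj card_image by fastforce
        show "(\<Union>l\<in>Ls. set l) = {1..n}" using P fin unfolding partition_on_def by auto
      next
        fix l assume "l \<in> Ls"
        then obtain b where b: "b \<in> P" "l = sorted_list_of_set b" using P by auto
        then show "l \<noteq> []" "distinct l" "length l \<in> R"
             "if 1 = 1 then sorted_wrt (<) l else if (1::nat) = 2 then \<forall>x\<in>set (tl l). hd l < x else True"
          using fin P by auto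
      next
        fix l l' assume "l \<in> Ls" "l' \<in> Ls" "l \<noteq> l'"
        then obtain b b' where "b \<in> P" "b' \<in> P" "l = sorted_list_of_set b" "l' = sorted_list_of_set b'" "b \<noteq> b'"
          using P by auto
        then show "set l \<inter> set l' = {}" using fin P(1) unfolding partition_on_def disjoint_def by auto
      qed
    qed
    show "image set ` LS 1 (<) R {1..n} k \<subseteq> ?P"
    proof
      fix P assume "P \<in> image set ` LS 1 (<) R {1..n} k"
      then obtain Ls where Ls: "Ls \<in> LS 1 (<) R {1..n} k" "P = set ` Ls" by auto
      have inj: "inj_on set Ls"
      proof (rule inj_onI)
        fix l l' assume "l \<in> Ls" "l' \<in> Ls" "set l = set l'"
        show "l = l'"
        proof (rule ccontr)
          assume "l \<noteq> l'"
          then have "set l \<inter> set l' = {}" using Ls(1) \<open>l \<in> Ls\<close> \<open>l' \<in> Ls\<close> unfolding LS_def by blast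
          then have "set l = {}" using \<open>set l = set l'\<close> by simp
          then show False using Ls(1) \<open>l \<in> Ls\<close> unfolding LS_def by auto
        qed
      qed
      show "P \<in> ?P"
      proof (intro CollectI conjI ballI)
        have L: "\<forall>l\<in>Ls. l \<noteq> []" "\<forall>l\<in>Ls. \<forall>l'\<in>Ls. l \<noteq> l' \<longrightarrow> set l \<inter> set l' = {}"
            "(\<Union>l\<in>Ls. set l) = {1..n}" using Ls(1) unfolding LS_def by auto
        show "partition_on {1..n} P"
        proof (rule partition_onI)
          show "\<Union> P = {1..n}" using L(3) Ls(2) by simp
          show "{} \<notin> P" using L(1) Ls(2) by auto
          fix p q assume "p \<in> P" "q \<in> P" "p \<noteq> q"
          then obtain l l' where "l \<in> Ls" "l' \<in> Ls" "p = set l" "q = set l'" "l \<noteq> l'" using Ls(2) by auto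
          then show "disjnt p q" using L(2) unfolding disjnt_def by auto
        qed
        show "card P = k" using Ls inj card_image unfolding LS_def by fastforce
        fix b assume "b \<in> P" then show "card b \<in> R"
          using Ls unfolding LS_def by (auto simp: distinct_card)
      qed
    qed
  qed
  then show ?thesis unfolding stirling2_R_def .
qed



context
  fixes \<sigma> :: "nat \<Rightarrow> nat" and S :: "nat set"
  assumes perm: "\<sigma> permutes S" and finS: "finite S"
begin

lemma sp_permutation: "permutation \<sigma>"
  using perm finS permutation_permutes by blast

lemma orb_support: "cyc_orbit \<sigma> x = set (support \<sigma> x)"
  unfolding cyc_orbit_def using support_set[OF sp_permutation] by simp

lemma orb_self: "x \<in> cyc_orbit \<sigma> x"
  unfolding cyc_orbit_def by (metis funpow_0 rangeI)

lemma orb_sub: "x \<in> S \<Longrightarrow> cyc_orbit \<sigma> x \<subseteq> S"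
  unfolding cyc_orbit_def using permutes_in_image[OF permutes_funpow[OF perm]] by blast

lemma orb_eq: assumes "y \<in> cyc_orbit \<sigma> x" shows "cyc_orbit \<sigma> y = cyc_orbit \<sigma> x"
proof (rule ccontr)
  assume ne: "cyc_orbit \<sigma> y \<noteq> cyc_orbit \<sigma> x"
  have d: "disjoint (range (\<lambda>a. set (support \<sigma> a)))" by (rule disjoint_support[OF sp_permutation])
  have "set (support \<sigma> y) \<inter> set (support \<sigma> x) = {}"
    using d ne unfolding orb_support disjoint_def by blast
  then show False using assms orb_self[of y] unfolding orb_support by blast
qed

lemma orb_disj: "cyc_orbit \<sigma> x \<noteq> cyc_orbit \<sigma> y \<Longrightarrow> cyc_orbit \<sigma> x \<inter> cyc_orbit \<sigma> y = {}"
  using orb_eq by blast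

lemma supp_hd: "hd (support \<sigma> m) = m"
proof -
  have "least_power \<sigma> m > 0" using least_power_of_permutation(2)[OF sp_permutation] .
  then have "[0..<least_power \<sigma> m] = 0 # [1..<least_power \<sigma> m]" by (simp add: upt_rec)
  then show ?thesis by simp
qed

lemma supp_distinct: "distinct (support \<sigma> m)"
  by (rule cycle_of_permutation[OF sp_permutation])

lemma supp_ne: "support \<sigma> m \<noteq> []"
  using least_power_of_permutation(2)[OF sp_permutation, of m] by simp

lemma supp_step: "x \<in> set (support \<sigma> m) \<Longrightarrow> \<sigma> x = cycle_of_list (support \<sigma> m) x"
  by (rule cycle_restrict[OF sp_permutation])

end

definition Phi :: "nat set \<Rightarrow> (nat \<Rightarrow> nat) \<Rightarrow> nat list set" where
  "Phi S \<sigma> = (\<lambda>Ob. support \<sigma> (Min Ob)) ` (cyc_orbit \<sigma> ` S)"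

lemma Phi_in_LS:
  assumes perm: "\<sigma> permutes S" and finS: "finite S"
    and k: "card (cyc_orbit \<sigma> ` S) = k" and R: "\<forall>b\<in>cyc_orbit \<sigma> ` S. card b \<in> R"
  shows "Phi S \<sigma> \<in> LS 2 (<) R S k"
proof -
  note L = orb_support[OF perm finS] orb_self[OF perm finS] orb_sub[OF perm finS] orb_eq[OF perm finS]
    supp_hd[OF perm finS] supp_distinct[OF perm finS] supp_ne[OF perm finS]
  define Os where "Os = cyc_orbit \<sigma> ` S"
  define f where "f Ob = support \<sigma> (Min Ob)" for Ob
  have Omin: "Min Ob \<in> Ob" "finite Ob" "cyc_orbit \<sigma> (Min Ob) = Ob" "set (f Ob) = Ob" if Oin: "Ob \<in> Os" for Ob
  proof -
    obtain x where x: "x \<in> S" "Ob = cyc_orbit \<sigma> x" using Oin unfolding Os_def by auto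
    show fO: "finite Ob" using L(3)[OF x(1)] finS x(2) finite_subset by blast
    show "Min Ob \<in> Ob" using fO x(2) L(2)[of x] by (intro Min_in) auto
    then show c: "cyc_orbit \<sigma> (Min Ob) = Ob" using L(4) x(2) by blast
    show "set (f Ob) = Ob" unfolding f_def using c L(1) by simp
  qed
  have inj: "inj_on f Os" by (metis Omin(4) inj_onI)
  show ?thesis unfolding LS_def Phi_def
  proof (intro CollectI conjI ballI impI)
    show "finite ((\<lambda>Ob. support \<sigma> (Min Ob)) ` cyc_orbit \<sigma> ` S)" using finS by simp
    show "card ((\<lambda>Ob. support \<sigma> (Min Ob)) ` cyc_orbit \<sigma> ` S) = k"
      using card_image[OF inj] k unfolding f_def Os_def by simp
  next
    fix l assume "l \<in> (\<lambda>Ob. support \<sigma> (Min Ob)) ` cyc_orbit \<sigma> ` S"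
    then obtain Ob where Ob: "Ob \<in> Os" "l = f Ob" unfolding Os_def f_def by auto
    show "l \<noteq> []" using Ob L(7) unfolding f_def by simp
    show "distinct l" using Ob L(6) unfolding f_def by simp
    have "card Ob \<in> R" using Ob(1) R unfolding Os_def by blast
    moreover have "card (set l) = length l" using L(6)[of "Min Ob"] Ob(2) distinct_card unfolding f_def by blast
    ultimately show "length l \<in> R" using Omin(4)[OF Ob(1)] Ob(2) by simp
    have hd: "hd l = Min Ob" using Ob L(5) unfolding f_def by simp
    have "\<forall>y\<in>set (tl l). Min Ob < y"
    proof
      fix y assume y: "y \<in> set (tl l)"
      have "l = hd l # tl l" using Ob L(7) unfolding f_def by simp
      then have "y \<noteq> hd l" "y \<in> Ob" using y L(6)[of "Min Ob"] Ob Omin(4)[OF Ob(1)] unfolding f_def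
        by (metis distinct.simps(2), metis list.set_intros(2))
      then show "Min Ob < y" using hd Min_le[OF Omin(2)[OF Ob(1)]] by fastforce
    qed
    then show "Qk 2 (<) l" unfolding Qk_def using hd by simp
  next
    fix l l' assume "l \<in> (\<lambda>Ob. support \<sigma> (Min Ob)) ` cyc_orbit \<sigma> ` S"
      "l' \<in> (\<lambda>Ob. support \<sigma> (Min Ob)) ` cyc_orbit \<sigma> ` S" "l \<noteq> l'"
    then obtain Ob Ob' where Ob: "Ob \<in> Os" "l = f Ob" "Ob' \<in> Os" "l' = f Ob'"
      unfolding Os_def f_def by auto
    have "Ob \<noteq> Ob'" using Ob \<open>l \<noteq> l'\<close> by auto
    obtain x x' where "Ob = cyc_orbit \<sigma> x" "Ob' = cyc_orbit \<sigma> x'" using Ob unfolding Os_def by auto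
    then have "Ob \<inter> Ob' = {}" using orb_disj[OF perm finS] \<open>Ob \<noteq> Ob'\<close> by blast
    then show "set l \<inter> set l' = {}" using Ob Omin(4) by simp
  next
    have "(\<Union>Ob\<in>Os. set (f Ob)) = \<Union> Os" using Omin(4) by simp
    also have "\<dots> = S" unfolding Os_def using L(2) L(3) by blast
    finally show "(\<Union>l\<in>(\<lambda>Ob. support \<sigma> (Min Ob)) ` cyc_orbit \<sigma> ` S. set l) = S"
      unfolding f_def Os_def by simp
  qed
qed

lemma Phi_inj:
  assumes p1: "\<sigma> permutes S" and p2: "\<tau> permutes S" and finS: "finite S" and eq: "Phi S \<sigma> = Phi S \<tau>"
  shows "\<sigma> = \<tau>"
proof
  fix x
  show "\<sigma> x = \<tau> x"
  proof (cases "x \<in> S")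
    case False then show ?thesis using p1 p2 by (simp add: permutes_not_in)
  next
    case True
    define Ob where "Ob = cyc_orbit \<sigma> x"
    have fO: "finite Ob" using orb_sub[OF p1 finS True] finS finite_subset unfolding Ob_def by blast
    have mO: "Min Ob \<in> Ob" using fO orb_self[OF p1 finS, of x] unfolding Ob_def by (intro Min_in) auto
    define l where "l = support \<sigma> (Min Ob)"
    have xl: "x \<in> set l" unfolding l_def
      using orb_eq[OF p1 finS mO[unfolded Ob_def]] orb_support[OF p1 finS] orb_self[OF p1 finS, of x]
      unfolding Ob_def by metis
    have s: "\<sigma> x = cycle_of_list l x" unfolding l_def by (rule supp_step[OF p1 finS xl[unfolded l_def]])
    have "l \<in> Phi S \<tau>" using eq True unfolding Phi_def l_def Ob_def by auto
    then obtain y where "l = support \<tau> (Min (cyc_orbit \<tau> y))" unfolding Phi_def by auto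
    then have "\<tau> x = cycle_of_list l x" using supp_step[OF p2 finS] xl by simp
    then show ?thesis using s by simp
  qed
qed



lemma cyc_iter_nth:
  assumes "distinct l" "j < length l"
  shows "(cycle_of_list l ^^ i) (l ! j) = l ! ((i + j) mod length l)"
proof -
  have m: "map (cycle_of_list l ^^ i) l = rotate i l" by (rule cyclic_rotation[OF assms(1)])
  have "(cycle_of_list l ^^ i) (l ! j) = rotate i l ! j" using assms(2)
    using arg_cong[OF m, of "\<lambda>xs. xs ! j"] by simp
  also have "\<dots> = l ! ((i + j) mod length l)" using assms(2) by (rule nth_rotate)
  finally show ?thesis .
qed

lemma Phi_surj:
  assumes Ls: "Ls \<in> LS 2 (<) R S k" and finS: "finite S"
  shows "\<exists>\<sigma>. \<sigma> permutes S \<and> card (cyc_orbit \<sigma> ` S) = k \<and> (\<forall>b\<in>cyc_orbit \<sigma> ` S. card b \<in> R)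
           \<and> Phi S \<sigma> = Ls"
proof -
  have LsP: "finite Ls" "card Ls = k" "\<And>l. l \<in> Ls \<Longrightarrow> l \<noteq> [] \<and> distinct l \<and> length l \<in> R \<and> Qk 2 (<) l"
    "\<And>l l'. l \<in> Ls \<Longrightarrow> l' \<in> Ls \<Longrightarrow> l \<noteq> l' \<Longrightarrow> set l \<inter> set l' = {}"
    "(\<Union>l\<in>Ls. set l) = S" using Ls unfolding LS_def by auto
  define \<sigma> where "\<sigma> x = (if \<exists>l\<in>Ls. x \<in> set l then cycle_of_list (THE l. l \<in> Ls \<and> x \<in> set l) x else x)" for x
  have the_l: "(THE l. l \<in> Ls \<and> x \<in> set l) = l" if "l \<in> Ls" "x \<in> set l" for l x
    using that LsP(4) by (intro the_equality) blast+
  have sig: "\<sigma> x = cycle_of_list l x" if "l \<in> Ls" "x \<in> set l" for l x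
    unfolding \<sigma>_def using that the_l by auto
  have sig_out: "\<sigma> x = x" if "x \<notin> S" for x
    unfolding \<sigma>_def using that LsP(5) by auto
  have cin: "cycle_of_list l x \<in> set l" if "x \<in> set l" for l x
    using permutes_in_image[OF cycle_permutes[of l]] that by simp
  have iter: "(\<sigma> ^^ i) x = (cycle_of_list l ^^ i) x" if "l \<in> Ls" "x \<in> set l" for l x i
  proof (induction i)
    case (Suc i)
    have "(cycle_of_list l ^^ i) x \<in> set l"
      using permutes_in_image[OF permutes_funpow[OF cycle_permutes[of l]]] that(2) by simp
    then show ?case using Suc sig[OF that(1)] by simp
  qed simp
  have iter_nth: "(\<sigma> ^^ i) (l ! j) = l ! ((i + j) mod length l)" if "l \<in> Ls" "j < length l" for l i j
    using iter[OF that(1) nth_mem[OF that(2)]] cyc_iter_nth[of l j i] LsP(3)[OF that(1)] that(2) by simp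
  have orbit: "cyc_orbit \<sigma> x = set l" if lx: "l \<in> Ls" "x \<in> set l" for l x
  proof -
    obtain j where j: "j < length l" "x = l ! j" using lx(2) unfolding in_set_conv_nth by blast
    have len: "length l > 0" using LsP(3)[OF lx(1)] by simp
    show ?thesis
    proof
      show "cyc_orbit \<sigma> x \<subseteq> set l"
        unfolding cyc_orbit_def using iter_nth[OF lx(1) j(1)] j(2) len by auto
      show "set l \<subseteq> cyc_orbit \<sigma> x"
      proof
        fix y assume "y \<in> set l"
        then obtain t where t: "t < length l" "y = l ! t" unfolding in_set_conv_nth by blast
        have "(t + length l - j + j) mod length l = t" using t j by simp
        then have "(\<sigma> ^^ (t + length l - j)) x = y" using iter_nth[OF lx(1) j(1)] j(2) t(2) by simp
        then show "y \<in> cyc_orbit \<sigma> x" unfolding cyc_orbit_def by (rule range_eqI[OF sym])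
      qed
    qed
  qed
  have inS: "\<exists>l\<in>Ls. x \<in> set l" if "x \<in> S" for x using that LsP(5) by blast
  have perm: "\<sigma> permutes S"
  proof (rule bij_imp_permutes)
    have img: "\<sigma> ` S \<subseteq> S"
    proof
      fix y assume "y \<in> \<sigma> ` S"
      then obtain x where x: "x \<in> S" "y = \<sigma> x" by auto
      then obtain l where l: "l \<in> Ls" "x \<in> set l" using inS by blast
      have "y \<in> set l" using cin[OF l(2)] unfolding x(2) sig[OF l] .
      then show "y \<in> S" using LsP(5) l(1) by blast
    qed
    have inj: "inj_on \<sigma> S"
    proof (rule inj_onI)
      fix x y assume xy: "x \<in> S" "y \<in> S" "\<sigma> x = \<sigma> y"
      obtain l where l: "l \<in> Ls" "x \<in> set l" using inS xy(1) by blast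
      obtain l' where l': "l' \<in> Ls" "y \<in> set l'" using inS xy(2) by blast
      have a: "\<sigma> x \<in> set l" "\<sigma> y \<in> set l'"
        using cin[OF l(2)] cin[OF l'(2)] unfolding sig[OF l] sig[OF l'] by auto
      have "l = l'"
      proof (rule ccontr)
        assume "l \<noteq> l'"
        then have "set l \<inter> set l' = {}" by (rule LsP(4)[OF l(1) l'(1)])
        then show False using a xy(3) by auto
      qed
      then have "cycle_of_list l x = cycle_of_list l y" using sig[OF l] sig[OF l'] xy(3) by simp
      then show "x = y" by (rule injD[OF bij_is_inj[OF permutation_bijective[OF permutation_of_cycle]]])
    qed
    show "bij_betw \<sigma> S S" unfolding bij_betw_def using inj endo_inj_surj[OF finS img inj] by simp
  qed (rule sig_out)
  have orbs: "cyc_orbit \<sigma> ` S = set ` Ls"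
  proof
    show "cyc_orbit \<sigma> ` S \<subseteq> set ` Ls" using inS orbit by blast
    show "set ` Ls \<subseteq> cyc_orbit \<sigma> ` S"
    proof
      fix b assume "b \<in> set ` Ls"
      then obtain l where l: "l \<in> Ls" "b = set l" by auto
      have "hd l \<in> set l" using LsP(3)[OF l(1)] by simp
      moreover then have "hd l \<in> S" using LsP(5) l(1) by blast
      ultimately show "b \<in> cyc_orbit \<sigma> ` S" using orbit[OF l(1)] l(2) by blast
    qed
  qed
  have injset: "inj_on set Ls"
  proof (rule inj_onI)
    fix l l' assume a: "l \<in> Ls" "l' \<in> Ls" "set l = set l'"
    show "l = l'"
    proof (rule ccontr)
      assume "l \<noteq> l'"
      then have "set l \<inter> set l' = {}" using LsP(4) a by blast
      then have "set l = {}" using a(3) by simp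
      then show False using LsP(3)[OF a(1)] by simp
    qed
  qed
  have card: "card (cyc_orbit \<sigma> ` S) = k" unfolding orbs card_image[OF injset] by (rule LsP(2))
  have R: "\<forall>b\<in>cyc_orbit \<sigma> ` S. card b \<in> R"
    unfolding orbs
  proof
    fix b assume "b \<in> set ` Ls"
    then obtain l where l: "l \<in> Ls" "b = set l" by blast
    have "card (set l) = length l" using LsP(3)[OF l(1)] distinct_card by blast
    then show "card b \<in> R" using LsP(3)[OF l(1)] l(2) by simp
  qed
  have supp: "support \<sigma> (Min (set l)) = l" if l: "l \<in> Ls" for l
  proof -
    have P: "l \<noteq> []" "distinct l" "Qk 2 (<) l" using LsP(3)[OF l] by auto
    have mn: "Min (set l) = hd l"
    proof (rule Min_eqI)
      fix y assume "y \<in> set l"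
      then have "y = hd l \<or> y \<in> set (tl l)" using P(1) by (cases l) auto
      then show "hd l \<le> y" using P(3) unfolding Qk_def by auto
    qed (use P(1) in auto)
    define n where "n = length l"
    have n0: "n > 0" using P(1) unfolding n_def by simp
    have hd0: "hd l = l ! 0" using P(1) by (simp add: hd_conv_nth)
    have it: "(\<sigma> ^^ i) (hd l) = l ! (i mod n)" for i
      using iter_nth[OF l, of 0 i] n0 hd0 unfolding n_def by simp
    have lp: "least_power \<sigma> (hd l) = n"
      unfolding least_power_def
    proof (rule Least_equality)
      show "(\<sigma> ^^ n) (hd l) = hd l \<and> n > 0" using it[of n] n0 hd0 by simp
      fix m assume m: "(\<sigma> ^^ m) (hd l) = hd l \<and> m > 0"
      then have "l ! (m mod n) = l ! 0" using it hd0 by simp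
      then have "m mod n = 0" using nth_eq_iff_index_eq[OF P(2)] n0 unfolding n_def by simp
      show "n \<le> m"
      proof (rule ccontr)
        assume "\<not> n \<le> m"
        then have "m mod n = m" by simp
        then show False using m \<open>m mod n = 0\<close> by simp
      qed
    qed
    have "support \<sigma> (hd l) = map (\<lambda>i. l ! i) [0..<n]"
      unfolding lp using it by simp
    also have "\<dots> = l" unfolding n_def by (rule map_nth)
    finally show ?thesis using mn by simp
  qed
  have "Phi S \<sigma> = Ls"
    unfolding Phi_def orbs image_image using supp by simp
  then show ?thesis using perm card R by blast
qed

lemma stirling1_LS: "stirling1_R R n k = card (LS 2 (<) R {1..n} k)"
proof -
  let ?S = "{\<sigma>. \<sigma> permutes {1..n} \<and> card (cyc_orbit \<sigma> ` {1..n}) = k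
       \<and> (\<forall>b \<in> cyc_orbit \<sigma> ` {1..n}. card b \<in> R)}"
  have inj: "inj_on (Phi {1..n}) ?S"
  proof (rule inj_onI)
    fix \<sigma> \<tau> assume "\<sigma> \<in> ?S" "\<tau> \<in> ?S" "Phi {1..n} \<sigma> = Phi {1..n} \<tau>"
    then show "\<sigma> = \<tau>" using Phi_inj[of \<sigma> "{1..n}" \<tau>] by simp
  qed
  have eq: "Phi {1..n} ` ?S = LS 2 (<) R {1..n} k"
  proof
    show "Phi {1..n} ` ?S \<subseteq> LS 2 (<) R {1..n} k"
    proof
      fix Ls assume "Ls \<in> Phi {1..n} ` ?S"
      then obtain \<sigma> where "\<sigma> \<in> ?S" "Ls = Phi {1..n} \<sigma>" by blast
      then show "Ls \<in> LS 2 (<) R {1..n} k" using Phi_in_LS[of \<sigma> "{1..n}" k R] by simp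
    qed
    show "LS 2 (<) R {1..n} k \<subseteq> Phi {1..n} ` ?S"
    proof
      fix Ls assume "Ls \<in> LS 2 (<) R {1..n} k"
      from Phi_surj[OF this finite_atLeastAtMost] obtain \<sigma> where "\<sigma> \<in> ?S" "Phi {1..n} \<sigma> = Ls" by blast
      then show "Ls \<in> Phi {1..n} ` ?S" by blast
    qed
  qed
  have "card ?S = card (LS 2 (<) R {1..n} k)" using card_image[OF inj] eq by simp
  then show ?thesis unfolding stirling1_R_def .
qed



definition keyf :: "nat \<Rightarrow> ptree \<Rightarrow> nat" where
  "keyf \<kappa> t = (if \<kappa> = 2 then lmin t else lmax t)"

definition ltk :: "nat \<Rightarrow> ptree \<Rightarrow> ptree \<Rightarrow> bool" where
  "ltk \<kappa> a b \<longleftrightarrow> keyf \<kappa> a < keyf \<kappa> b"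

definition qok :: "nat \<Rightarrow> ptree \<Rightarrow> bool" where
  "qok \<kappa> t \<longleftrightarrow> (\<forall>ts. Node ts \<in> set (subtrees t) \<longrightarrow> Qk \<kappa> (ltk \<kappa>) ts)"

definition valid :: "nat \<Rightarrow> nat set \<Rightarrow> ptree \<Rightarrow> bool" where
  "valid \<kappa> R t \<longleftrightarrow> phylo_R R t \<and> distinct (leaves t) \<and> qok \<kappa> t"

definition forests :: "nat \<Rightarrow> nat set \<Rightarrow> nat set \<Rightarrow> nat \<Rightarrow> ptree set set" where
  "forests \<kappa> R S k = {F. finite F \<and> card F = k \<and> (\<forall>t\<in>F. valid \<kappa> R t)
      \<and> (\<forall>t\<in>F. \<forall>t'\<in>F. t \<noteq> t' \<longrightarrow> set (leaves t) \<inter> set (leaves t') = {})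
      \<and> (\<Union>t\<in>F. set (leaves t)) = S}"

lemma subtrees_Node_set:
  "set (subtrees (Node ts)) = insert (Node ts) (\<Union>t\<in>set ts. set (subtrees t))"
  by simp

lemma phylo_Leaf[simp]: "phylo_R R (Leaf i)" unfolding phylo_R_def by simp
lemma qok_Leaf[simp]: "qok \<kappa> (Leaf i)" unfolding qok_def by simp
lemma valid_Leaf[simp]: "valid \<kappa> R (Leaf i)" unfolding valid_def by simp

lemma phylo_Node:
  "phylo_R R (Node ts) \<longleftrightarrow> 2 \<le> length ts \<and> length ts \<in> R \<and> (\<forall>t\<in>set ts. phylo_R R t)"
  unfolding phylo_R_def subtrees_Node_set by blast

lemma qok_Node:
  "qok \<kappa> (Node ts) \<longleftrightarrow> Qk \<kappa> (ltk \<kappa>) ts \<and> (\<forall>t\<in>set ts. qok \<kappa> t)"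
  unfolding qok_def subtrees_Node_set by blast

lemma phylo_leaves_ne: "phylo_R R t \<Longrightarrow> leaves t \<noteq> []"
proof (induction t)
  case (Leaf i) then show ?case by simp
next
  case (Node ts)
  then have "2 \<le> length ts" "\<forall>t\<in>set ts. phylo_R R t" using phylo_Node by auto
  then obtain t where "t \<in> set ts" by (cases ts) auto
  then show ?case using Node.IH \<open>\<forall>t\<in>set ts. phylo_R R t\<close> by auto
qed

lemma dcm:
  assumes "\<forall>x\<in>set xs. f x \<noteq> []"
  shows "distinct (concat (map f xs)) \<longleftrightarrow> (distinct xs \<and> (\<forall>x\<in>set xs. distinct (f x))
          \<and> (\<forall>x\<in>set xs. \<forall>y\<in>set xs. x \<noteq> y \<longrightarrow> set (f x) \<inter> set (f y) = {}))"
  using assms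
proof (induction xs)
  case Nil then show ?case by simp
next
  case (Cons a xs)
  have fa: "f a \<noteq> []" using Cons.prems by simp
  have IH: "distinct (concat (map f xs)) \<longleftrightarrow> (distinct xs \<and> (\<forall>x\<in>set xs. distinct (f x))
          \<and> (\<forall>x\<in>set xs. \<forall>y\<in>set xs. x \<noteq> y \<longrightarrow> set (f x) \<inter> set (f y) = {}))"
    using Cons by simp
  show ?case
  proof
    assume d: "distinct (concat (map f (a # xs)))"
    then have d1: "distinct (f a)" "distinct (concat (map f xs))"
      "set (f a) \<inter> (\<Union>x\<in>set xs. set (f x)) = {}" by auto
    have "a \<notin> set xs"
    proof
      assume "a \<in> set xs"
      then have "set (f a) \<subseteq> (\<Union>x\<in>set xs. set (f x))" by auto
      then have "set (f a) = {}" using d1(3) Int_absorb2 by metis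
      then show False using fa by simp
    qed
    then show "distinct (a # xs) \<and> (\<forall>x\<in>set (a # xs). distinct (f x)) \<and>
      (\<forall>x\<in>set (a # xs). \<forall>y\<in>set (a # xs). x \<noteq> y \<longrightarrow> set (f x) \<inter> set (f y) = {})"
      using d1 IH by auto
  next
    assume r: "distinct (a # xs) \<and> (\<forall>x\<in>set (a # xs). distinct (f x)) \<and>
      (\<forall>x\<in>set (a # xs). \<forall>y\<in>set (a # xs). x \<noteq> y \<longrightarrow> set (f x) \<inter> set (f y) = {})"
    then have "distinct (concat (map f xs))" using IH by auto
    moreover have "set (f a) \<inter> (\<Union>x\<in>set xs. set (f x)) = {}" using r by auto
    ultimately show "distinct (concat (map f (a # xs)))" using r by simp
  qed
qed

lemma valid_leaves_ne: "valid \<kappa> R t \<Longrightarrow> leaves t \<noteq> []"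
  unfolding valid_def using phylo_leaves_ne by blast

lemma valid_Node:
  "valid \<kappa> R (Node ts) \<longleftrightarrow> 2 \<le> length ts \<and> length ts \<in> R \<and> Qk \<kappa> (ltk \<kappa>) ts
     \<and> (\<forall>t\<in>set ts. valid \<kappa> R t) \<and> distinct ts
     \<and> (\<forall>t\<in>set ts. \<forall>t'\<in>set ts. t \<noteq> t' \<longrightarrow> set (leaves t) \<inter> set (leaves t') = {})"
proof
  assume v: "valid \<kappa> R (Node ts)"
  then have p: "2 \<le> length ts" "length ts \<in> R" "\<forall>t\<in>set ts. phylo_R R t"
    "Qk \<kappa> (ltk \<kappa>) ts" "\<forall>t\<in>set ts. qok \<kappa> t" "distinct (concat (map leaves ts))"
    unfolding valid_def phylo_Node qok_Node by auto
  have ne: "\<forall>t\<in>set ts. leaves t \<noteq> []" using p(3) phylo_leaves_ne by blast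
  from p(6)[unfolded dcm[OF ne]] have "distinct ts" "\<forall>t\<in>set ts. distinct (leaves t)"
    "\<forall>t\<in>set ts. \<forall>t'\<in>set ts. t \<noteq> t' \<longrightarrow> set (leaves t) \<inter> set (leaves t') = {}" by auto
  then show "2 \<le> length ts \<and> length ts \<in> R \<and> Qk \<kappa> (ltk \<kappa>) ts
     \<and> (\<forall>t\<in>set ts. valid \<kappa> R t) \<and> distinct ts
     \<and> (\<forall>t\<in>set ts. \<forall>t'\<in>set ts. t \<noteq> t' \<longrightarrow> set (leaves t) \<inter> set (leaves t') = {})"
    using p unfolding valid_def by auto
next
  assume a: "2 \<le> length ts \<and> length ts \<in> R \<and> Qk \<kappa> (ltk \<kappa>) ts
     \<and> (\<forall>t\<in>set ts. valid \<kappa> R t) \<and> distinct ts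
     \<and> (\<forall>t\<in>set ts. \<forall>t'\<in>set ts. t \<noteq> t' \<longrightarrow> set (leaves t) \<inter> set (leaves t') = {})"
  have ne: "\<forall>t\<in>set ts. leaves t \<noteq> []" using a valid_leaves_ne by blast
  have "distinct (concat (map leaves ts))" unfolding dcm[OF ne] using a unfolding valid_def by auto
  then show "valid \<kappa> R (Node ts)" using a unfolding valid_def phylo_Node qok_Node by auto
qed

lemma keyf_in: "leaves t \<noteq> [] \<Longrightarrow> keyf \<kappa> t \<in> set (leaves t)"
  unfolding keyf_def lmin_def lmax_def by (auto intro: Min_in Max_in)

lemma forests_props:
  assumes "F \<in> forests \<kappa> R S k"
  shows "finite F" "card F = k" "\<And>t. t \<in> F \<Longrightarrow> valid \<kappa> R t"
    "\<And>t t'. t \<in> F \<Longrightarrow> t' \<in> F \<Longrightarrow> t \<noteq> t' \<Longrightarrow> set (leaves t) \<inter> set (leaves t') = {}"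
    "(\<Union>t\<in>F. set (leaves t)) = S"
  using assms unfolding forests_def by auto

lemma forest_key_inj:
  assumes "F \<in> forests \<kappa> R S k"
  shows "inj_on (keyf \<kappa>) F"
proof (rule inj_onI)
  fix t t' assume a: "t \<in> F" "t' \<in> F" "keyf \<kappa> t = keyf \<kappa> t'"
  show "t = t'"
  proof (rule ccontr)
    assume "t \<noteq> t'"
    then have d: "set (leaves t) \<inter> set (leaves t') = {}" using forests_props(4)[OF assms a(1,2)] by simp
    have "keyf \<kappa> t \<in> set (leaves t)" "keyf \<kappa> t' \<in> set (leaves t')"
      using keyf_in valid_leaves_ne forests_props(3)[OF assms] a(1,2) by blast+
    then show False using d a(3) by auto
  qed
qed

lemma forest_card_le:
  assumes "F \<in> forests \<kappa> R S k" "finite S"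
  shows "k \<le> card S"
proof -
  have "inj_on (keyf \<kappa>) F" by (rule forest_key_inj[OF assms(1)])
  moreover have "keyf \<kappa> ` F \<subseteq> S"
  proof
    fix x assume "x \<in> keyf \<kappa> ` F"
    then obtain t where t: "t \<in> F" "x = keyf \<kappa> t" by blast
    have "x \<in> set (leaves t)" using keyf_in valid_leaves_ne forests_props(3)[OF assms(1) t(1)] t(2) by blast
    then show "x \<in> S" using forests_props(5)[OF assms(1)] t(1) by blast
  qed
  ultimately have "card F \<le> card S" using card_inj_on_le assms(2) by blast
  then show ?thesis using forests_props(2)[OF assms(1)] by simp
qed

definition VT :: "nat \<Rightarrow> nat set \<Rightarrow> nat set \<Rightarrow> ptree set" where
  "VT \<kappa> R S = {t. valid \<kappa> R t \<and> set (leaves t) \<subseteq> S}"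

lemma finite_VT:
  assumes "finite S" shows "finite (VT \<kappa> R S)"
  using assms
proof (induction S rule: finite_psubset_induct)
  case (psubset S)
  define A where "A = (\<Union>S'\<in>Pow S - {S}. VT \<kappa> R S')"
  have fA: "finite A" unfolding A_def using psubset by auto
  have "VT \<kappa> R S \<subseteq> Leaf ` S \<union> Node ` {ts. set ts \<subseteq> A \<and> distinct ts}"
  proof
    fix t assume t: "t \<in> VT \<kappa> R S"
    show "t \<in> Leaf ` S \<union> Node ` {ts. set ts \<subseteq> A \<and> distinct ts}"
    proof (cases t)
      case (Leaf i) then show ?thesis using t unfolding VT_def by auto
    next
      case (Node ts)
      have v: "valid \<kappa> R (Node ts)" "set (leaves (Node ts)) \<subseteq> S" using t Node unfolding VT_def by auto
      note vn = v(1)[unfolded valid_Node]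
      have "set ts \<subseteq> A"
      proof
        fix c assume c: "c \<in> set ts"
        have len: "2 \<le> length ts" using vn by simp
        obtain c' where c': "c' \<in> set ts" "c' \<noteq> c"
        proof -
          have "card (set ts) \<ge> 2" using vn len distinct_card[of ts] by simp
          have "set ts - {c} \<noteq> {}"
          proof
            assume "set ts - {c} = {}"
            then have "set ts \<subseteq> {c}" by blast
            then have "card (set ts) \<le> card {c}" by (rule card_mono[rotated]) simp
            then show False using \<open>card (set ts) \<ge> 2\<close> by simp
          qed
          then show ?thesis using that by blast
        qed
        have sub: "set (leaves c) \<subseteq> S" "set (leaves c') \<subseteq> S" using v(2) c c'(1) by auto
        have dis: "set (leaves c) \<inter> set (leaves c') = {}" using vn c c' by auto
        have ne: "leaves c' \<noteq> []" using vn c'(1) valid_leaves_ne by blast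
        have "set (leaves c) \<noteq> S"
        proof
          assume "set (leaves c) = S"
          then have "set (leaves c') \<subseteq> set (leaves c)" using sub(2) by simp
          then have "set (leaves c) \<inter> set (leaves c') = set (leaves c')" by (rule Int_absorb1)
          then show False using dis ne by simp
        qed
        then have "set (leaves c) \<in> Pow S - {S}" using sub(1) by auto
        moreover have "c \<in> VT \<kappa> R (set (leaves c))" unfolding VT_def using vn c by auto
        ultimately show "c \<in> A" unfolding A_def by blast
      qed
      then show ?thesis using Node vn by auto
    qed
  qed
  moreover have "finite (Leaf ` S \<union> Node ` {ts. set ts \<subseteq> A \<and> distinct ts})"
    using psubset finite_subset_distinct[OF fA] by auto
  ultimately show ?case by (rule finite_subset)
qed

lemma finite_forests:
  assumes "finite S" shows "finite (forests \<kappa> R S k)"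
proof -
  have "forests \<kappa> R S k \<subseteq> Pow (VT \<kappa> R S)"
    unfolding forests_def VT_def by auto
  then show ?thesis using finite_VT[OF assms] finite_subset by blast
qed



definition glue :: "ptree list \<Rightarrow> ptree" where
  "glue l = (if length l = 1 then hd l else Node l)"

definition kids :: "ptree \<Rightarrow> ptree list" where
  "kids t = (case t of Node ts \<Rightarrow> ts | Leaf i \<Rightarrow> [])"

definition isnode :: "ptree \<Rightarrow> bool" where
  "isnode t = (case t of Node ts \<Rightarrow> True | Leaf i \<Rightarrow> False)"

definition NL :: "ptree set \<Rightarrow> ptree set" where
  "NL G = {t\<in>G. isnode t}"

definition UF :: "ptree list set \<Rightarrow> ptree set" where
  "UF Ls = (\<Union>l\<in>Ls. set l)"

definition phi :: "ptree list set \<Rightarrow> ptree set \<times> ptree set" where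
  "phi Ls = (glue ` Ls, glue ` {l\<in>Ls. length l \<noteq> 1})"

definition psi :: "ptree set \<times> ptree set \<Rightarrow> ptree list set" where
  "psi GM = (\<lambda>t. [t]) ` (fst GM - snd GM) \<union> kids ` snd GM"

definition PS :: "nat \<Rightarrow> nat set \<Rightarrow> nat \<Rightarrow> nat \<Rightarrow> ptree list set set" where
  "PS \<kappa> R n k = {Ls. UF Ls \<in> forests \<kappa> R {1..n} (card (UF Ls)) \<and> Ls \<in> LS \<kappa> (ltk \<kappa>) R (UF Ls) k}"

definition GMs :: "nat \<Rightarrow> nat set \<Rightarrow> nat \<Rightarrow> nat \<Rightarrow> (ptree set \<times> ptree set) set" where
  "GMs \<kappa> R n k = Sigma (forests \<kappa> R {1..n} k) (\<lambda>G. Pow (NL G))"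

definition LL :: "ptree list \<Rightarrow> nat set" where
  "LL l = (\<Union>t\<in>set l. set (leaves t))"

lemma leaves_glue: "l \<noteq> [] \<Longrightarrow> set (leaves (glue l)) = LL l"
  unfolding glue_def LL_def by (cases l) auto

lemma Qk_single: "Qk \<kappa> lt [t]" unfolding Qk_def by simp

lemma isnode_Node: "isnode t \<longleftrightarrow> (\<exists>ts. t = Node ts)"
  unfolding isnode_def by (cases t) auto

lemma kids_Node[simp]: "kids (Node ts) = ts" unfolding kids_def by simp

lemma LS_props:
  assumes "Ls \<in> LS \<kappa> lt R X k"
  shows "finite Ls" "card Ls = k" "\<And>l. l \<in> Ls \<Longrightarrow> l \<noteq> [] \<and> distinct l \<and> length l \<in> R \<and> Qk \<kappa> lt l"
    "\<And>l l'. l \<in> Ls \<Longrightarrow> l' \<in> Ls \<Longrightarrow> l \<noteq> l' \<Longrightarrow> set l \<inter> set l' = {}"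
    "(\<Union>l\<in>Ls. set l) = X"
  using assms unfolding LS_def by auto

context
  fixes \<kappa> :: nat and R :: "nat set" and n k :: nat and Ls :: "ptree list set"
  assumes Ls: "Ls \<in> PS \<kappa> R n k"
begin

lemma PS_F: "UF Ls \<in> forests \<kappa> R {1..n} (card (UF Ls))" using Ls unfolding PS_def by auto
lemma PS_L: "Ls \<in> LS \<kappa> (ltk \<kappa>) R (UF Ls) k" using Ls unfolding PS_def by auto

lemma PS_sub: "l \<in> Ls \<Longrightarrow> set l \<subseteq> UF Ls" unfolding UF_def by auto

lemma PS_valid: "l \<in> Ls \<Longrightarrow> t \<in> set l \<Longrightarrow> valid \<kappa> R t"
  using forests_props(3)[OF PS_F] PS_sub by blast

lemma PS_LL_ne: "l \<in> Ls \<Longrightarrow> LL l \<noteq> {}"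
proof -
  assume l: "l \<in> Ls"
  have "l \<noteq> []" using LS_props(3)[OF PS_L l] by simp
  then obtain t where t: "t \<in> set l" by (cases l) auto
  have "leaves t \<noteq> []" using valid_leaves_ne[OF PS_valid[OF l t]] .
  then show ?thesis using t unfolding LL_def by auto
qed

lemma PS_LL_disj: "l \<in> Ls \<Longrightarrow> l' \<in> Ls \<Longrightarrow> l \<noteq> l' \<Longrightarrow> LL l \<inter> LL l' = {}"
proof -
  assume a: "l \<in> Ls" "l' \<in> Ls" "l \<noteq> l'"
  have d: "set l \<inter> set l' = {}" by (rule LS_props(4)[OF PS_L a])
  have "set (leaves t) \<inter> set (leaves t') = {}" if "t \<in> set l" "t' \<in> set l'" for t t'
  proof -
    have "t \<noteq> t'" using d that by auto
    then show ?thesis using forests_props(4)[OF PS_F] PS_sub[OF a(1)] PS_sub[OF a(2)] that by blast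
  qed
  then show ?thesis unfolding LL_def by blast
qed

lemma PS_glue_inj: "inj_on glue Ls"
proof (rule inj_onI)
  fix l l' assume a: "l \<in> Ls" "l' \<in> Ls" "glue l = glue l'"
  show "l = l'"
  proof (rule ccontr)
    assume ne: "l \<noteq> l'"
    have "LL l = LL l'" using a leaves_glue LS_props(3)[OF PS_L] by metis
    then have "LL l = {}" using PS_LL_disj[OF a(1,2) ne] by simp
    then show False using PS_LL_ne[OF a(1)] by simp
  qed
qed

lemma PS_glue_valid: "l \<in> Ls \<Longrightarrow> valid \<kappa> R (glue l)"
proof -
  assume l: "l \<in> Ls"
  have P: "l \<noteq> []" "distinct l" "length l \<in> R" "Qk \<kappa> (ltk \<kappa>) l" using LS_props(3)[OF PS_L l] by auto
  show ?thesis
  proof (cases "length l = 1")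
    case True
    then have "hd l \<in> set l" using P by simp
    then show ?thesis using PS_valid[OF l] True unfolding glue_def by simp
  next
    case False
    have "length l \<noteq> 0" using P(1) by simp
    then have len: "2 \<le> length l" using False by linarith
    have "\<forall>t\<in>set l. \<forall>t'\<in>set l. t \<noteq> t' \<longrightarrow> set (leaves t) \<inter> set (leaves t') = {}"
      using forests_props(4)[OF PS_F] PS_sub[OF l] by blast
    then have "valid \<kappa> R (Node l)" unfolding valid_Node using len P PS_valid[OF l] by blast
    then show ?thesis using False unfolding glue_def by simp
  qed
qed

lemma phi_in: "phi Ls \<in> GMs \<kappa> R n k"
proof -
  define G where "G = glue ` Ls"
  define M where "M = glue ` {l\<in>Ls. length l \<noteq> 1}"
  have fin: "finite Ls" using LS_props(1)[OF PS_L] .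
  have G: "G \<in> forests \<kappa> R {1..n} k" unfolding forests_def
  proof (intro CollectI conjI ballI impI)
    show "finite G" unfolding G_def using fin by simp
    show "card G = k" unfolding G_def using card_image[OF PS_glue_inj] LS_props(2)[OF PS_L] by simp
    show "valid \<kappa> R t" if "t \<in> G" for t using that PS_glue_valid unfolding G_def by blast
  next
    fix t t' assume a: "t \<in> G" "t' \<in> G" "t \<noteq> t'"
    then obtain l l' where l: "l \<in> Ls" "l' \<in> Ls" "t = glue l" "t' = glue l'" unfolding G_def by blast
    then have "l \<noteq> l'" using a(3) by blast
    then have "LL l \<inter> LL l' = {}" using PS_LL_disj l by blast
    then show "set (leaves t) \<inter> set (leaves t') = {}"
      using leaves_glue LS_props(3)[OF PS_L] l by metis
  next
    have "(\<Union>t\<in>G. set (leaves t)) = (\<Union>l\<in>Ls. LL l)"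
      unfolding G_def using leaves_glue LS_props(3)[OF PS_L] by auto
    also have "\<dots> = (\<Union>t\<in>UF Ls. set (leaves t))" unfolding LL_def UF_def by blast
    also have "\<dots> = {1..n}" using forests_props(5)[OF PS_F] .
    finally show "(\<Union>t\<in>G. set (leaves t)) = {1..n}" .
  qed
  have "M \<subseteq> NL G"
  proof
    fix t assume "t \<in> M"
    then obtain l where l: "l \<in> Ls" "length l \<noteq> 1" "t = glue l" unfolding M_def by blast
    then have "t = Node l" unfolding glue_def by simp
    moreover have "t \<in> G" unfolding G_def using l by blast
    ultimately show "t \<in> NL G" unfolding NL_def isnode_def by simp
  qed
  then show ?thesis using G unfolding phi_def GMs_def G_def M_def by auto
qed

end



context
  fixes \<kappa> :: nat and R :: "nat set" and n k :: nat and G M :: "ptree set"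
  assumes GM: "(G, M) \<in> GMs \<kappa> R n k" and R1: "1 \<in> R"
begin

lemma GM_G: "G \<in> forests \<kappa> R {1..n} k" using GM unfolding GMs_def by auto
lemma GM_M: "M \<subseteq> G" "\<And>t. t \<in> M \<Longrightarrow> isnode t" using GM unfolding GMs_def NL_def by auto

lemma GM_node: assumes "t \<in> M" shows "t = Node (kids t)" "valid \<kappa> R (Node (kids t))"
proof -
  obtain ts where "t = Node ts" using GM_M(2)[OF assms] isnode_Node by blast
  then show "t = Node (kids t)" by simp
  then show "valid \<kappa> R (Node (kids t))" using forests_props(3)[OF GM_G] GM_M(1) assms by auto
qed

lemma GM_kids: assumes "t \<in> M"
  shows "2 \<le> length (kids t)" "length (kids t) \<in> R" "Qk \<kappa> (ltk \<kappa>) (kids t)"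
    "\<And>c. c \<in> set (kids t) \<Longrightarrow> valid \<kappa> R c" "distinct (kids t)"
    "\<And>c c'. c \<in> set (kids t) \<Longrightarrow> c' \<in> set (kids t) \<Longrightarrow> c \<noteq> c' \<Longrightarrow> set (leaves c) \<inter> set (leaves c') = {}"
  using GM_node(2)[OF assms] unfolding valid_Node by auto

lemma kid_leaves: "t \<in> M \<Longrightarrow> c \<in> set (kids t) \<Longrightarrow> set (leaves c) \<subseteq> set (leaves t)"
  using GM_node(1)[of t] by (metis UN_upper leaves.simps(2) set_concat set_map image_eqI)

lemma GM_disjG: "t \<in> G \<Longrightarrow> t' \<in> G \<Longrightarrow> t \<noteq> t' \<Longrightarrow> set (leaves t) \<inter> set (leaves t') = {}"
  by (rule forests_props(4)[OF GM_G])

lemma kid_ne: "t \<in> M \<Longrightarrow> c \<in> set (kids t) \<Longrightarrow> leaves c \<noteq> []"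
  using GM_kids(4) valid_leaves_ne by blast

lemma kid_notin: assumes "u \<in> G" "u \<notin> M" "t \<in> M" "c \<in> set (kids t)"
  shows "set (leaves u) \<inter> set (leaves c) = {}" "c \<noteq> u"
proof -
  have "u \<noteq> t" using assms by auto
  then have "set (leaves u) \<inter> set (leaves t) = {}" using GM_disjG assms GM_M(1) by blast
  then show d: "set (leaves u) \<inter> set (leaves c) = {}" using kid_leaves[OF assms(3,4)] by blast
  show "c \<noteq> u"
  proof
    assume "c = u"
    then have "set (leaves c) = {}" using d by simp
    then show False using kid_ne[OF assms(3,4)] by simp
  qed
qed

lemma kid_kid: assumes "t \<in> M" "t' \<in> M" "t \<noteq> t'" "c \<in> set (kids t)" "c' \<in> set (kids t')"
  shows "set (leaves c) \<inter> set (leaves c') = {}" "c \<noteq> c'"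
proof -
  have "set (leaves t) \<inter> set (leaves t') = {}" using GM_disjG assms GM_M(1) by blast
  then show d: "set (leaves c) \<inter> set (leaves c') = {}"
    using kid_leaves[OF assms(1,4)] kid_leaves[OF assms(2,5)] by blast
  show "c \<noteq> c'"
  proof
    assume "c = c'"
    then have "set (leaves c) = {}" using d by simp
    then show False using kid_ne[OF assms(1,4)] by simp
  qed
qed

lemma UF_psi: "UF (psi (G, M)) = (G - M) \<union> (\<Union>t\<in>M. set (kids t))"
  unfolding UF_def psi_def by auto

lemma psi_F: "UF (psi (G, M)) \<in> forests \<kappa> R {1..n} (card (UF (psi (G, M))))"
  unfolding UF_psi forests_def
proof (intro CollectI conjI ballI impI)
  have fG: "finite G" using forests_props(1)[OF GM_G] .
  then have "finite M" using GM_M(1) finite_subset by blast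
  then show "finite (G - M \<union> (\<Union>t\<in>M. set (kids t)))" using fG by simp
  show "card (G - M \<union> (\<Union>t\<in>M. set (kids t))) = card (G - M \<union> (\<Union>t\<in>M. set (kids t)))" ..
next
  fix u assume "u \<in> G - M \<union> (\<Union>t\<in>M. set (kids t))"
  then show "valid \<kappa> R u" using forests_props(3)[OF GM_G] GM_kids(4) by blast
next
  fix u u' assume u: "u \<in> G - M \<union> (\<Union>t\<in>M. set (kids t))" and u': "u' \<in> G - M \<union> (\<Union>t\<in>M. set (kids t))"
    and ne: "u \<noteq> u'"
  show "set (leaves u) \<inter> set (leaves u') = {}"
  proof (cases "u \<in> G - M")
    case True
    show ?thesis
    proof (cases "u' \<in> G - M")
      case True then show ?thesis using \<open>u \<in> G - M\<close> ne GM_disjG by blast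
    next
      case False
      then obtain t' where "t' \<in> M" "u' \<in> set (kids t')" using u' by blast
      then show ?thesis using kid_notin(1) \<open>u \<in> G - M\<close> by blast
    qed
  next
    case False
    then obtain t where t: "t \<in> M" "u \<in> set (kids t)" using u by blast
    show ?thesis
    proof (cases "u' \<in> G - M")
      case True then show ?thesis using kid_notin(1)[OF _ _ t] by blast
    next
      case False
      then obtain t' where t': "t' \<in> M" "u' \<in> set (kids t')" using u' by blast
      show ?thesis
      proof (cases "t = t'")
        case True then show ?thesis using GM_kids(6)[OF t(1) t(2)] t' ne by blast
      next
        case False then show ?thesis using kid_kid(1)[OF t(1) t'(1) False t(2) t'(2)] by blast
      qed
    qed
  qed
next
  have "(\<Union>u\<in>G - M \<union> (\<Union>t\<in>M. set (kids t)). set (leaves u))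
      = (\<Union>u\<in>G - M. set (leaves u)) \<union> (\<Union>t\<in>M. \<Union>c\<in>set (kids t). set (leaves c))" by blast
  also have "(\<Union>t\<in>M. \<Union>c\<in>set (kids t). set (leaves c)) = (\<Union>t\<in>M. set (leaves t))"
  proof (rule SUP_cong[OF refl])
    fix t assume "t \<in> M"
    have "set (leaves t) = set (leaves (Node (kids t)))" using GM_node(1)[OF \<open>t \<in> M\<close>] by simp
    then show "(\<Union>c\<in>set (kids t). set (leaves c)) = set (leaves t)" by simp
  qed
  also have "(\<Union>u\<in>G - M. set (leaves u)) \<union> (\<Union>t\<in>M. set (leaves t)) = (\<Union>u\<in>G. set (leaves u))"
    using GM_M(1) by blast
  also have "\<dots> = {1..n}" using forests_props(5)[OF GM_G] .
  finally show "(\<Union>u\<in>G - M \<union> (\<Union>t\<in>M. set (kids t)). set (leaves u)) = {1..n}" .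
qed

lemma kids_inj: "inj_on kids M"
proof (rule inj_onI)
  fix t t' assume "t \<in> M" "t' \<in> M" "kids t = kids t'"
  then show "t = t'" using GM_node(1) by metis
qed

lemma psi_L: "psi (G, M) \<in> LS \<kappa> (ltk \<kappa>) R (UF (psi (G, M))) k"
proof -
  have fG: "finite G" using forests_props(1)[OF GM_G] .
  have fM: "finite M" using GM_M(1) fG finite_subset by blast
  have disj: "(\<lambda>t. [t]) ` (G - M) \<inter> kids ` M = {}"
  proof (rule ccontr)
    assume "(\<lambda>t. [t]) ` (G - M) \<inter> kids ` M \<noteq> {}"
    then obtain u t where "t \<in> M" "[u] = kids t" by blast
    then show False using GM_kids(1)[of t] by (metis One_nat_def length_Cons list.size(3) numeral_le_one_iff semiring_norm(69))
  qed
  have c1: "card ((\<lambda>t. [t]) ` (G - M)) = card (G - M)" by (rule card_image) (simp add: inj_on_def)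
  have c2: "card (kids ` M) = card M" by (rule card_image[OF kids_inj])
  have cG: "card G = k" using forests_props(2)[OF GM_G] .
  show ?thesis unfolding LS_def
  proof (intro CollectI conjI ballI impI)
    show "finite (psi (G, M))" unfolding psi_def using fG fM by simp
    have "card (psi (G, M)) = card ((\<lambda>t. [t]) ` (G - M)) + card (kids ` M)"
      unfolding psi_def fst_conv snd_conv by (rule card_Un_disjoint) (use fG fM disj in auto)
    also have "\<dots> = card G" using c1 c2 GM_M(1) fM card_Diff_subset[OF fM GM_M(1)]
      card_mono[OF fG GM_M(1)] by simp
    finally show "card (psi (G, M)) = k" using cG by simp
    show "(\<Union>l\<in>psi (G, M). set l) = UF (psi (G, M))" unfolding UF_def ..
  next
    fix l assume "l \<in> psi (G, M)"
    then consider (s) u where "u \<in> G - M" "l = [u]" | (kk) t where "t \<in> M" "l = kids t"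
      unfolding psi_def by auto
    then have "l \<noteq> [] \<and> distinct l \<and> length l \<in> R \<and> Qk \<kappa> (ltk \<kappa>) l"
    proof cases
      case s then show ?thesis using R1 Qk_single by simp
    next
      case kk then show ?thesis using GM_kids[OF kk(1)] by auto
    qed
    then show "l \<noteq> []" "distinct l" "length l \<in> R" "Qk \<kappa> (ltk \<kappa>) l" by auto
  next
    fix l l' assume l: "l \<in> psi (G, M)" and l': "l' \<in> psi (G, M)" and ne: "l \<noteq> l'"
    from l consider (s) u where "u \<in> G - M" "l = [u]" | (kk) t where "t \<in> M" "l = kids t"
      unfolding psi_def by auto
    then show "set l \<inter> set l' = {}"
    proof cases
      case s
      from l' consider (s') u' where "u' \<in> G - M" "l' = [u']" | (kk') t' where "t' \<in> M" "l' = kids t'"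
        unfolding psi_def by auto
      then show ?thesis
      proof cases
        case s' then show ?thesis using s ne by auto
      next
        case kk' then show ?thesis using s kid_notin(2)[of u t'] by auto
      qed
    next
      case kk
      from l' consider (s') u' where "u' \<in> G - M" "l' = [u']" | (kk') t' where "t' \<in> M" "l' = kids t'"
        unfolding psi_def by auto
      then show ?thesis
      proof cases
        case s' then show ?thesis using kk kid_notin(2)[of u' t] by auto
      next
        case kk'
        then have "t \<noteq> t'" using kk ne by auto
        then show ?thesis using kk kk' kid_kid(2) by blast
      qed
    qed
  qed
qed

lemma psi_in: "psi (G, M) \<in> PS \<kappa> R n k"
  unfolding PS_def using psi_F psi_L by simp

lemma phi_psi: "phi (psi (G, M)) = (G, M)"
proof -
  have g1: "glue [u] = u" for u unfolding glue_def by simp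
  have g2: "glue (kids t) = t" if "t \<in> M" for t
    using GM_kids(1)[OF that] GM_node(1)[OF that] unfolding glue_def by simp
  have l2: "length (kids t) \<noteq> 1" if "t \<in> M" for t using GM_kids(1)[OF that] by simp
  have a: "glue ` psi (G, M) = G"
  proof -
    have "glue ` psi (G, M) = (G - M) \<union> glue ` kids ` M" unfolding psi_def image_Un image_image g1 by simp
    also have "glue ` kids ` M = M" using g2 by (simp add: image_image)
    finally show ?thesis using GM_M(1) by blast
  qed
  have "{l \<in> psi (G, M). length l \<noteq> 1} = kids ` M"
    unfolding psi_def using l2 by auto
  then have b: "glue ` {l \<in> psi (G, M). length l \<noteq> 1} = M" using g2 by (simp add: image_image)
  show ?thesis unfolding phi_def a b ..
qed

end

lemma psi_phi:
  assumes Ls: "Ls \<in> PS \<kappa> R n k"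
  shows "psi (phi Ls) = Ls"
proof -
  define L1 where "L1 = {l\<in>Ls. length l = 1}"
  define L2 where "L2 = {l\<in>Ls. length l \<noteq> 1}"
  have inj: "inj_on glue Ls" by (rule PS_glue_inj[OF Ls])
  have "glue ` Ls - glue ` L2 = glue ` (Ls - L2)"
    by (rule inj_on_image_set_diff[symmetric, OF inj]) (auto simp: L2_def)
  moreover have "Ls - L2 = L1" unfolding L1_def L2_def by auto
  ultimately have d: "glue ` Ls - glue ` L2 = glue ` L1" by simp
  have s1: "(\<lambda>t. [t]) ` glue ` L1 = L1"
  proof -
    have "[glue l] = l" if "l \<in> L1" for l
      using that unfolding L1_def glue_def by (cases l) auto
    then show ?thesis by (force simp: image_image)
  qed
  have s2: "kids ` glue ` L2 = L2"
  proof -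
    have "kids (glue l) = l" if "l \<in> L2" for l
      using that unfolding L2_def glue_def by simp
    then show ?thesis by (force simp: image_image)
  qed
  have "psi (phi Ls) = L1 \<union> L2"
    unfolding phi_def psi_def fst_conv snd_conv L2_def[symmetric] d s1 s2 ..
  also have "\<dots> = Ls" unfolding L1_def L2_def by auto
  finally show ?thesis .
qed

lemma phi_bij:
  assumes "1 \<in> R"
  shows "bij_betw phi (PS \<kappa> R n k) (GMs \<kappa> R n k)"
proof (rule bij_betw_byWitness[where f'=psi])
  show "\<forall>a\<in>PS \<kappa> R n k. psi (phi a) = a" using psi_phi by blast
  show "\<forall>b\<in>GMs \<kappa> R n k. phi (psi b) = b" using phi_psi[OF _ assms] by auto
  show "phi ` PS \<kappa> R n k \<subseteq> GMs \<kappa> R n k" using phi_in by blast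
  show "psi ` GMs \<kappa> R n k \<subseteq> PS \<kappa> R n k" using psi_in[OF _ assms] by auto
qed



lemma sign_lemma:
  assumes Ls: "Ls \<in> PS \<kappa> R n k"
  shows "(-1::real) ^ (n - card (UF Ls)) * (-1) ^ (forest_edges (UF Ls))
       = (-1) ^ (n - k) * ((-1) ^ (forest_edges (fst (phi Ls))) * (-1) ^ (card (snd (phi Ls))))"
proof -
  note LP = LS_props[OF PS_L[OF Ls]]
  define L2 where "L2 = {l\<in>Ls. length l \<noteq> 1}"
  define a where "a l = (if length l = 1 then 1 else 0::nat)" for l :: "ptree list"
  define b where "b l = (if length l = 1 then 0 else length l)" for l :: "ptree list"
  define c where "c l = (if length l = 1 then 0 else 1::nat)" for l :: "ptree list"
  define A where "A = (\<Sum>l\<in>Ls. a l)"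
  define B where "B = (\<Sum>l\<in>Ls. b l)"
  define C where "C = (\<Sum>l\<in>Ls. c l)"
  have fin: "finite Ls" by (rule LP(1))
  have cF: "card (UF Ls) = A + B"
  proof -
    have "card (UF Ls) = (\<Sum>l\<in>Ls. card (set l))"
      unfolding UF_def by (rule card_UN_disjoint) (use fin LP(4) in auto)
    also have "\<dots> = (\<Sum>l\<in>Ls. a l + b l)"
    proof (rule sum.cong[OF refl])
      fix l assume "l \<in> Ls"
      then have "card (set l) = length l" using LP(3) distinct_card by blast
      then show "card (set l) = a l + b l" unfolding a_def b_def by simp
    qed
    finally show ?thesis unfolding A_def B_def by (simp add: sum.distrib)
  qed
  have ck: "k = A + C"
  proof -
    have "k = (\<Sum>l\<in>Ls. 1)" using LP(2) by simp
    also have "\<dots> = (\<Sum>l\<in>Ls. a l + c l)" unfolding a_def c_def by (rule sum.cong) auto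
    finally show ?thesis unfolding A_def C_def by (simp add: sum.distrib)
  qed
  have CB: "C \<le> B" unfolding C_def B_def
  proof (rule sum_mono)
    fix l assume "l \<in> Ls"
    then have "l \<noteq> []" using LP(3) by blast
    then show "c l \<le> b l" unfolding c_def b_def by (cases l) auto
  qed
  have le: "card (UF Ls) \<le> n" using forest_card_le[OF PS_F[OF Ls]] by simp
  have inj: "inj_on glue Ls" by (rule PS_glue_inj[OF Ls])
  have cM: "card (snd (phi Ls)) = C"
  proof -
    have "card (snd (phi Ls)) = card L2" unfolding phi_def snd_conv L2_def
      by (rule card_image) (rule inj_on_subset[OF inj], auto)
    also have "card L2 = (\<Sum>l\<in>Ls. c l)"
    proof -
      have "(\<Sum>l\<in>Ls. c l) = (\<Sum>l\<in>Ls. if length l \<noteq> 1 then 1 else 0)"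
        by (rule sum.cong) (auto simp: c_def)
      also have "\<dots> = (\<Sum>l\<in>L2. 1)" unfolding L2_def by (rule sum.inter_filter[OF fin, symmetric])
      also have "\<dots> = card L2" by simp
      finally show ?thesis by simp
    qed
    finally show ?thesis unfolding C_def .
  qed
  have feF: "forest_edges (UF Ls) = (\<Sum>l\<in>Ls. \<Sum>t\<in>set l. edges t)"
    unfolding forest_edges_def UF_def by (rule sum.UNION_disjoint) (use fin LP(4) in auto)
  have feG: "forest_edges (fst (phi Ls)) = forest_edges (UF Ls) + B"
  proof -
    have "forest_edges (fst (phi Ls)) = (\<Sum>l\<in>Ls. edges (glue l))"
      unfolding forest_edges_def phi_def fst_conv by (rule sum.reindex[OF inj, unfolded comp_def])
    also have "\<dots> = (\<Sum>l\<in>Ls. (\<Sum>t\<in>set l. edges t) + b l)"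
    proof (rule sum.cong[OF refl])
      fix l assume l: "l \<in> Ls"
      have P: "l \<noteq> []" "distinct l" using LP(3)[OF l] by auto
      show "edges (glue l) = (\<Sum>t\<in>set l. edges t) + b l"
      proof (cases "length l = 1")
        case True
        then obtain x where "l = [x]" by (cases l) auto
        then show ?thesis unfolding glue_def b_def by simp
      next
        case False
        then show ?thesis unfolding glue_def b_def
          using sum_list_distinct_conv_sum_set[OF P(2), of edges] by simp
      qed
    qed
    finally show ?thesis unfolding feF B_def by (simp add: sum.distrib)
  qed
  define e1 where "e1 = (n - card (UF Ls)) + forest_edges (UF Ls)"
  define e2 where "e2 = (n - k) + (forest_edges (fst (phi Ls)) + card (snd (phi Ls)))"
  have e: "e2 = e1 + 2 * B" unfolding e1_def e2_def feG cM using cF ck CB le by linarith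
  have "(-1::real) ^ e2 = (-1) ^ e1" unfolding e power_add power_mult by simp
  then show ?thesis unfolding e1_def e2_def power_add by simp
qed

lemma alt_pow:
  assumes "finite A"
  shows "(\<Sum>M\<in>Pow A. (-1::real) ^ card M) = (if A = {} then 1 else 0)"
  using assms
proof (induction A rule: finite_induct)
  case empty then show ?case by simp
next
  case (insert x A)
  have fP: "finite (Pow A)" using insert by simp
  have injI: "inj_on (insert x) (Pow A)"
    using insert(2) by (intro inj_onI) (metis Pow_iff insert_ident subsetD)
  have disj: "Pow A \<inter> insert x ` Pow A = {}" using insert(2) by auto
  have "(\<Sum>M\<in>Pow (insert x A). (-1::real) ^ card M)
      = (\<Sum>M\<in>Pow A. (-1::real) ^ card M) + (\<Sum>M\<in>insert x ` Pow A. (-1::real) ^ card M)"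
    unfolding Pow_insert by (rule sum.union_disjoint) (use fP disj in auto)
  also have "(\<Sum>M\<in>insert x ` Pow A. (-1::real) ^ card M) = (\<Sum>M\<in>Pow A. (-1::real) ^ card (insert x M))"
    by (rule sum.reindex[OF injI, unfolded comp_def])
  also have "\<dots> = (\<Sum>M\<in>Pow A. - ((-1::real) ^ card M))"
  proof (rule sum.cong[OF refl])
    fix M assume "M \<in> Pow A"
    then have "x \<notin> M" "finite M" using insert finite_subset by auto
    then show "(-1::real) ^ card (insert x M) = - ((-1) ^ card M)" by simp
  qed
  finally show ?case by (simp add: sum_negf)
qed

lemma all_leaf_sum:
  assumes "1 \<le> n"
  shows "(\<Sum>G\<in>forests \<kappa> R {1..n} k. (-1::real) ^ forest_edges G * (if NL G = {} then 1 else 0))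
       = (if n = k then 1 else 0)"
proof -
  define AL where "AL = {G \<in> forests \<kappa> R {1..n} k. NL G = {}}"
  have fin: "finite (forests \<kappa> R {1..n} k)" by (rule finite_forests) simp
  have AL: "AL = (if n = k then {Leaf ` {1..n}} else {})"
  proof -
    have eq: "G = Leaf ` {1..n}" if G: "G \<in> AL" for G
    proof -
      have GF: "G \<in> forests \<kappa> R {1..n} k" "NL G = {}" using G unfolding AL_def by auto
      have lf: "\<exists>i. t = Leaf i" if "t \<in> G" for t
        using GF(2) that unfolding NL_def isnode_def by (cases t) auto
      have cov: "(\<Union>t\<in>G. set (leaves t)) = {1..n}" by (rule forests_props(5)[OF GF(1)])
      show ?thesis
      proof
        show "G \<subseteq> Leaf ` {1..n}"
        proof
          fix t assume t: "t \<in> G"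
          then obtain i where i: "t = Leaf i" using lf by blast
          then have "i \<in> (\<Union>t\<in>G. set (leaves t))" using t by (intro UN_I[OF t]) simp
          then have "i \<in> {1..n}" unfolding cov .
          then show "t \<in> Leaf ` {1..n}" using i by blast
        qed
        show "Leaf ` {1..n} \<subseteq> G"
        proof
          fix u assume "u \<in> Leaf ` {1..n}"
          then obtain i where i: "i \<in> {1..n}" "u = Leaf i" by blast
          then obtain t where t: "t \<in> G" "i \<in> set (leaves t)" using cov by blast
          obtain j where "t = Leaf j" using lf t(1) by blast
          then show "u \<in> G" using t i by simp
        qed
      qed
    qed
    have LF: "Leaf ` {1..n} \<in> forests \<kappa> R {1..n} n" unfolding forests_def
    proof (intro CollectI conjI ballI impI)
      show "finite (Leaf ` {1..n})" by simp
      show "card (Leaf ` {1..n}) = n" by (subst card_image) (simp_all add: inj_on_def)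
      show "valid \<kappa> R t" if "t \<in> Leaf ` {1..n}" for t using that by auto
      show "set (leaves t) \<inter> set (leaves t') = {}" if "t \<in> Leaf ` {1..n}" "t' \<in> Leaf ` {1..n}" "t \<noteq> t'" for t t'
        using that by auto
      show "(\<Union>t\<in>Leaf ` {1..n}. set (leaves t)) = {1..n}" by simp
    qed
    have il: "\<not> isnode (Leaf i)" for i unfolding isnode_def by simp
    have NLL: "NL (Leaf ` {1..n}) = {}"
    proof (rule equals0I)
      fix t assume t: "t \<in> NL (Leaf ` {1..n})"
      then have "t \<in> Leaf ` {1..n}" "isnode t" unfolding NL_def by simp_all
      then obtain i where "t = Leaf i" "isnode t" by blast
      then show False using il by simp
    qed
    show ?thesis
    proof (cases "n = k")
      case True
      have mem: "Leaf ` {1..n} \<in> AL" using LF NLL True unfolding AL_def by simp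
      have "AL = {Leaf ` {1..n}}"
      proof
        show "AL \<subseteq> {Leaf ` {1..n}}"
        proof
          fix G assume "G \<in> AL"
          then show "G \<in> {Leaf ` {1..n}}" using eq by simp
        qed
        show "{Leaf ` {1..n}} \<subseteq> AL" using mem by simp
      qed
      then show ?thesis using True by simp
    next
      case False
      have "AL = {}"
      proof (rule ccontr)
        assume "AL \<noteq> {}"
        then obtain G where G: "G \<in> AL" by blast
        then have "card G = k" unfolding AL_def using forests_props(2) by blast
        moreover have "card G = n" using eq[OF G] by (simp add: card_image inj_on_def)
        ultimately show False using False by simp
      qed
      then show ?thesis using False by simp
    qed
  qed
  have "(\<Sum>G\<in>forests \<kappa> R {1..n} k. (-1::real) ^ forest_edges G * (if NL G = {} then 1 else 0))
      = (\<Sum>G\<in>forests \<kappa> R {1..n} k. if NL G = {} then (-1::real) ^ forest_edges G else 0)"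
    by (rule sum.cong) auto
  also have "\<dots> = (\<Sum>G\<in>AL. (-1::real) ^ forest_edges G)"
    unfolding AL_def using fin by (simp add: sum.inter_filter)
  also have "\<dots> = (if n = k then 1 else 0)"
  proof -
    have z: "forest_edges (Leaf ` {1..m}) = 0" for m unfolding forest_edges_def by (rule sum.neutral) auto
    show ?thesis unfolding AL using z by simp
  qed
  finally show ?thesis .
qed

lemma PS_sum:
  assumes R1: "1 \<in> R" and n: "1 \<le> n"
  shows "(\<Sum>Ls\<in>PS \<kappa> R n k. (-1::real) ^ (n - card (UF Ls)) * (-1) ^ (forest_edges (UF Ls)))
       = (if n = k then 1 else 0)"
proof -
  define g where "g GM = (-1::real) ^ (n - k) * ((-1) ^ (forest_edges (fst GM)) * (-1) ^ (card (snd GM)))"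
    for GM :: "ptree set \<times> ptree set"
  have fin: "finite (forests \<kappa> R {1..n} k)" by (rule finite_forests) simp
  have finNL: "finite (NL G)" if "G \<in> forests \<kappa> R {1..n} k" for G
    using forests_props(1)[OF that] unfolding NL_def by simp
  have "(\<Sum>Ls\<in>PS \<kappa> R n k. (-1::real) ^ (n - card (UF Ls)) * (-1) ^ (forest_edges (UF Ls)))
      = (\<Sum>Ls\<in>PS \<kappa> R n k. g (phi Ls))"
    unfolding g_def by (rule sum.cong[OF refl]) (rule sign_lemma)
  also have "\<dots> = (\<Sum>GM\<in>GMs \<kappa> R n k. g GM)"
    by (rule sum.reindex_bij_betw[OF phi_bij[OF R1]])
  also have "\<dots> = (\<Sum>G\<in>forests \<kappa> R {1..n} k. \<Sum>M\<in>Pow (NL G). g (G, M))"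
  proof -
    have "(\<Sum>G\<in>forests \<kappa> R {1..n} k. \<Sum>M\<in>Pow (NL G). g (G, M))
        = (\<Sum>(G, M)\<in>Sigma (forests \<kappa> R {1..n} k) (\<lambda>G. Pow (NL G)). g (G, M))"
      by (rule sum.Sigma) (use fin finNL in auto)
    then show ?thesis unfolding GMs_def by (simp add: case_prod_eta)
  qed
  also have "\<dots> = (\<Sum>G\<in>forests \<kappa> R {1..n} k. (-1::real) ^ (n - k) * ((-1) ^ forest_edges G
                      * (if NL G = {} then 1 else 0)))"
  proof (rule sum.cong[OF refl])
    fix G assume "G \<in> forests \<kappa> R {1..n} k"
    have "(\<Sum>M\<in>Pow (NL G). g (G, M)) = (-1::real) ^ (n - k) * ((-1) ^ forest_edges G
            * (\<Sum>M\<in>Pow (NL G). (-1) ^ card M))"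
      unfolding g_def by (simp add: sum_distrib_left)
    then show "(\<Sum>M\<in>Pow (NL G). g (G, M)) = (-1::real) ^ (n - k) * ((-1) ^ forest_edges G
                      * (if NL G = {} then 1 else 0))"
      using alt_pow[OF finNL[OF \<open>G \<in> _\<close>]] by simp
  qed
  also have "\<dots> = (-1::real) ^ (n - k) * (if n = k then 1 else 0)"
    using all_leaf_sum[OF n] by (simp add: sum_distrib_left[symmetric])
  also have "\<dots> = (if n = k then 1 else 0)" by simp
  finally show ?thesis .
qed



lemma emo_sum:
  assumes "finite FF"
  shows "even_minus_odd FF = (\<Sum>F\<in>FF. (-1::real) ^ forest_edges F)"
proof -
  have "(\<Sum>F\<in>FF. (-1::real) ^ forest_edges F) = (\<Sum>F\<in>FF. if even (forest_edges F) then 1 else -1)"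
    by (rule sum.cong) auto
  also have "\<dots> = (\<Sum>F\<in>FF \<inter> {F. even (forest_edges F)}. 1) + (\<Sum>F\<in>FF \<inter> - {F. even (forest_edges F)}. -1)"
    by (rule sum.If_cases[OF assms])
  also have "FF \<inter> {F. even (forest_edges F)} = {F\<in>FF. even (forest_edges F)}" by blast
  also have "FF \<inter> - {F. even (forest_edges F)} = {F\<in>FF. odd (forest_edges F)}" by blast
  finally show ?thesis unfolding even_minus_odd_def by simp
qed

lemma order_iso:
  fixes f :: "'a \<Rightarrow> nat"
  assumes fin: "finite F" and inj: "inj_on f F" and c: "card F = j"
  shows "\<exists>h. bij_betw h {1..j} F \<and> (\<forall>x\<in>{1..j}. \<forall>y\<in>{1..j}. x < y \<longleftrightarrow> f (h x) < f (h y))"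
proof -
  define xs where "xs = sorted_list_of_set (f ` F)"
  have sw: "sorted_wrt (<) xs" unfolding xs_def by (rule strict_sorted_list_of_set)
  have dxs: "distinct xs" unfolding xs_def by simp
  have sxs: "set xs = f ` F" unfolding xs_def using fin by simp
  have lxs: "length xs = j" unfolding xs_def using fin card_image[OF inj] c by simp
  define h where "h i = inv_into F f (xs ! (i - 1))" for i
  have mem: "xs ! (i - 1) \<in> f ` F" if "i \<in> {1..j}" for i
    using that sxs lxs by (metis atLeastAtMost_iff diff_less less_le_trans nth_mem zero_less_one le_neq_implies_less
        less_one not_less_eq_eq)
  have fh: "f (h i) = xs ! (i - 1)" if "i \<in> {1..j}" for i
    unfolding h_def using mem[OF that] by (rule f_inv_into_f)
  have hF: "h i \<in> F" if "i \<in> {1..j}" for i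
    unfolding h_def using mem[OF that] by (rule inv_into_into)
  have mono: "f (h x) < f (h y)" if "x \<in> {1..j}" "y \<in> {1..j}" "x < y" for x y
  proof -
    have "x - 1 < y - 1" "y - 1 < length xs" using that lxs by auto
    then have "xs ! (x - 1) < xs ! (y - 1)" using sorted_wrt_nth_less[OF sw] by blast
    then show ?thesis using fh that by simp
  qed
  have injh: "inj_on h {1..j}"
  proof (rule inj_onI)
    fix x y assume a: "x \<in> {1..j}" "y \<in> {1..j}" "h x = h y"
    then have "xs ! (x - 1) = xs ! (y - 1)" using fh by metis
    moreover have "x - 1 < length xs" "y - 1 < length xs" using a lxs by auto
    ultimately have "x - 1 = y - 1" using nth_eq_iff_index_eq[OF dxs] by blast
    then show "x = y" using a by auto
  qed
  have img: "h ` {1..j} = F"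
  proof
    show "h ` {1..j} \<subseteq> F" using hF by blast
    show "F \<subseteq> h ` {1..j}"
    proof
      fix t assume t: "t \<in> F"
      then have "f t \<in> set xs" using sxs by blast
      then obtain p where p: "p < length xs" "xs ! p = f t" unfolding in_set_conv_nth by blast
      have "h (p + 1) = inv_into F f (f t)" unfolding h_def using p by simp
      also have "\<dots> = t" using inv_into_f_f[OF inj t] .
      finally have "h (p + 1) = t" .
      moreover have "p + 1 \<in> {1..j}" using p lxs by auto
      ultimately show "t \<in> h ` {1..j}" by (metis imageI)
    qed
  qed
  have iff: "\<forall>x\<in>{1..j}. \<forall>y\<in>{1..j}. x < y \<longleftrightarrow> f (h x) < f (h y)"
  proof (intro ballI iffI)
    fix x y assume "x \<in> {1..j}" "y \<in> {1..j}" "x < y"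
    then show "f (h x) < f (h y)" using mono by blast
  next
    fix x y assume a: "x \<in> {1..j}" "y \<in> {1..j}" "f (h x) < f (h y)"
    show "x < y"
    proof (rule ccontr)
      assume "\<not> x < y"
      then have "y = x \<or> y < x" by auto
      then show False using mono[OF a(2) a(1)] a(3) by auto
    qed
  qed
  show ?thesis using injh img iff unfolding bij_betw_def by blast
qed

lemma LS_forest:
  assumes "F \<in> forests \<kappa> R S j"
  shows "card (LS \<kappa> (<) R {1..j} k) = card (LS \<kappa> (ltk \<kappa>) R F k)"
proof -
  obtain h where h: "bij_betw h {1..j} F" "\<forall>x\<in>{1..j}. \<forall>y\<in>{1..j}. x < y \<longleftrightarrow> keyf \<kappa> (h x) < keyf \<kappa> (h y)"
    using order_iso[OF forests_props(1)[OF assms] forest_key_inj[OF assms] forests_props(2)[OF assms]] by blast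
  show ?thesis by (rule LS_transport[OF h(1)]) (use h(2) in \<open>simp add: ltk_def\<close>)
qed

lemma finite_LS:
  assumes "finite X" shows "finite (LS \<kappa> lt R X k)"
proof -
  have "LS \<kappa> lt R X k \<subseteq> Pow {l. set l \<subseteq> X \<and> distinct l}" unfolding LS_def by auto
  then show ?thesis using finite_subset_distinct[OF assms] finite_subset by blast
qed

lemma main_comb:
  assumes R1: "1 \<in> R" and n: "1 \<le> n"
  shows "(\<Sum>j=1..n. ((-1::real) ^ (n - j) * even_minus_odd (forests \<kappa> R {1..n} j)) * real (card (LS \<kappa> (<) R {1..j} k)))
       = (if n = k then 1 else 0)"
proof -
  define w where "w F = (-1::real) ^ (n - card F) * (-1) ^ (forest_edges F)" for F :: "ptree set"
  define FF where "FF = (\<Union>j\<in>{1..n}. forests \<kappa> R {1..n} j)"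
  have finf: "finite (forests \<kappa> R {1..n} j)" for j by (rule finite_forests) simp
  have stepA: "((-1::real) ^ (n - j) * even_minus_odd (forests \<kappa> R {1..n} j)) * real (card (LS \<kappa> (<) R {1..j} k))
      = (\<Sum>F\<in>forests \<kappa> R {1..n} j. \<Sum>Ls\<in>LS \<kappa> (ltk \<kappa>) R F k. w F)" for j
  proof -
    have "((-1::real) ^ (n - j) * even_minus_odd (forests \<kappa> R {1..n} j)) * real (card (LS \<kappa> (<) R {1..j} k))
        = (\<Sum>F\<in>forests \<kappa> R {1..n} j. (-1::real) ^ (n - j) * (-1) ^ forest_edges F * real (card (LS \<kappa> (<) R {1..j} k)))"
      unfolding emo_sum[OF finf] by (simp add: sum_distrib_left sum_distrib_right mult.assoc)
    also have "\<dots> = (\<Sum>F\<in>forests \<kappa> R {1..n} j. \<Sum>Ls\<in>LS \<kappa> (ltk \<kappa>) R F k. w F)"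
    proof (rule sum.cong[OF refl])
      fix F assume F: "F \<in> forests \<kappa> R {1..n} j"
      have "card F = j" using forests_props(2)[OF F] .
      then show "(-1::real) ^ (n - j) * (-1) ^ forest_edges F * real (card (LS \<kappa> (<) R {1..j} k))
          = (\<Sum>Ls\<in>LS \<kappa> (ltk \<kappa>) R F k. w F)"
        unfolding LS_forest[OF F] w_def by simp
    qed
    finally show ?thesis .
  qed
  have "(\<Sum>j=1..n. ((-1::real) ^ (n - j) * even_minus_odd (forests \<kappa> R {1..n} j)) * real (card (LS \<kappa> (<) R {1..j} k)))
      = (\<Sum>j\<in>{1..n}. \<Sum>F\<in>forests \<kappa> R {1..n} j. \<Sum>Ls\<in>LS \<kappa> (ltk \<kappa>) R F k. w F)"
    using stepA by simp
  also have "\<dots> = (\<Sum>F\<in>FF. \<Sum>Ls\<in>LS \<kappa> (ltk \<kappa>) R F k. w F)"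
    unfolding FF_def
  proof (rule sum.UNION_disjoint[symmetric])
    show "finite {1..n}" by simp
    show "\<forall>j\<in>{1..n}. finite (forests \<kappa> R {1..n} j)" using finf by blast
    show "\<forall>i\<in>{1..n}. \<forall>j\<in>{1..n}. i \<noteq> j \<longrightarrow> forests \<kappa> R {1..n} i \<inter> forests \<kappa> R {1..n} j = {}"
      using forests_props(2) by blast
  qed
  also have "\<dots> = (\<Sum>F\<in>FF. \<Sum>Ls\<in>LS \<kappa> (ltk \<kappa>) R F k. w (UF Ls))"
  proof (rule sum.cong[OF refl], rule sum.cong[OF refl])
    fix F Ls assume "Ls \<in> LS \<kappa> (ltk \<kappa>) R F k"
    then have "UF Ls = F" unfolding UF_def using LS_props(5) by blast
    then show "w F = w (UF Ls)" by simp
  qed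
  also have "\<dots> = (\<Sum>Ls\<in>(\<Union>F\<in>FF. LS \<kappa> (ltk \<kappa>) R F k). w (UF Ls))"
  proof (rule sum.UNION_disjoint[symmetric])
    show "finite FF" unfolding FF_def using finf by simp
    show "\<forall>F\<in>FF. finite (LS \<kappa> (ltk \<kappa>) R F k)"
    proof
      fix F assume "F \<in> FF"
      then obtain j where "F \<in> forests \<kappa> R {1..n} j" unfolding FF_def by blast
      then have "finite F" by (rule forests_props(1))
      then show "finite (LS \<kappa> (ltk \<kappa>) R F k)" by (rule finite_LS)
    qed
    show "\<forall>F\<in>FF. \<forall>F'\<in>FF. F \<noteq> F' \<longrightarrow> LS \<kappa> (ltk \<kappa>) R F k \<inter> LS \<kappa> (ltk \<kappa>) R F' k = {}"
    proof (intro ballI impI)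
      fix F F' :: "ptree set" assume "F \<noteq> F'"
      show "LS \<kappa> (ltk \<kappa>) R F k \<inter> LS \<kappa> (ltk \<kappa>) R F' k = {}"
      proof (rule equals0I)
        fix Ls assume "Ls \<in> LS \<kappa> (ltk \<kappa>) R F k \<inter> LS \<kappa> (ltk \<kappa>) R F' k"
        then have L: "Ls \<in> LS \<kappa> (ltk \<kappa>) R F k" "Ls \<in> LS \<kappa> (ltk \<kappa>) R F' k" by simp_all
        have "(\<Union>l\<in>Ls. set l) = F" by (rule LS_props(5)[OF L(1)])
        moreover have "(\<Union>l\<in>Ls. set l) = F'" by (rule LS_props(5)[OF L(2)])
        ultimately show False using \<open>F \<noteq> F'\<close> by simp
      qed
    qed
  qed
  also have "(\<Union>F\<in>FF. LS \<kappa> (ltk \<kappa>) R F k) = PS \<kappa> R n k"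
  proof
    show "(\<Union>F\<in>FF. LS \<kappa> (ltk \<kappa>) R F k) \<subseteq> PS \<kappa> R n k"
    proof
      fix Ls assume "Ls \<in> (\<Union>F\<in>FF. LS \<kappa> (ltk \<kappa>) R F k)"
      then obtain F j where F: "j \<in> {1..n}" "F \<in> forests \<kappa> R {1..n} j" "Ls \<in> LS \<kappa> (ltk \<kappa>) R F k"
        unfolding FF_def by blast
      have U: "UF Ls = F" unfolding UF_def using LS_props(5)[OF F(3)] .
      have "card F = j" using forests_props(2)[OF F(2)] .
      then show "Ls \<in> PS \<kappa> R n k" unfolding PS_def using U F by simp
    qed
    show "PS \<kappa> R n k \<subseteq> (\<Union>F\<in>FF. LS \<kappa> (ltk \<kappa>) R F k)"
    proof
      fix Ls assume Ls: "Ls \<in> PS \<kappa> R n k"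
      define F where "F = UF Ls"
      have F: "F \<in> forests \<kappa> R {1..n} (card F)" "Ls \<in> LS \<kappa> (ltk \<kappa>) R F k"
        using Ls unfolding PS_def F_def by auto
      have le: "card F \<le> n" using forest_card_le[OF F(1)] by simp
      have "F \<noteq> {}"
      proof
        assume "F = {}"
        then have "(\<Union>t\<in>F. set (leaves t)) = {}" by simp
        then show False using forests_props(5)[OF F(1)] n by simp
      qed
      then have "card F \<ge> 1" using forests_props(1)[OF F(1)] by (simp add: Suc_leI card_gt_0_iff)
      then have "F \<in> FF" unfolding FF_def using F(1) le by auto
      then show "Ls \<in> (\<Union>F\<in>FF. LS \<kappa> (ltk \<kappa>) R F k)" using F(2) by blast
    qed
  qed
  also have "(\<Sum>Ls\<in>PS \<kappa> R n k. w (UF Ls)) = (if n = k then 1 else 0)"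
    unfolding w_def by (rule PS_sum[OF R1 n])
  finally show ?thesis .
qed



lemma Qk0: "Qk 0 lt l" unfolding Qk_def by simp

lemma qok0: "qok 0 t" unfolding qok_def Qk_def by simp

lemma lo_eq: "lo_forests R n k = forests 0 R {1..n} k"
  unfolding lo_forests_def forests_def valid_def qok_def using Qk0 by auto

lemma qok1: "qok 1 t \<longleftrightarrow> incr_ordered t"
proof -
  have "Qk 1 (ltk 1) ts \<longleftrightarrow> sorted_wrt (<) (map lmax ts)" for ts
    unfolding Qk_def ltk_def keyf_def sorted_wrt_map by simp
  then show ?thesis unfolding qok_def incr_ordered_def by simp
qed

lemma qok2: "qok 2 t \<longleftrightarrow> minfirst_ordered t"
proof
  assume q: "qok 2 t"
  show "minfirst_ordered t" unfolding minfirst_ordered_def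
  proof (intro allI impI ballI)
    fix s ts s' assume a: "Node (s # ts) \<in> set (subtrees t)" "s' \<in> set ts"
    have "Qk 2 (ltk 2) (s # ts)" using q a(1) unfolding qok_def by blast
    then show "lmin s < lmin s'" using a(2) unfolding Qk_def ltk_def keyf_def by simp
  qed
next
  assume m: "minfirst_ordered t"
  show "qok 2 t" unfolding qok_def
  proof (intro allI impI)
    fix ts assume a: "Node ts \<in> set (subtrees t)"
    show "Qk 2 (ltk 2) ts"
    proof (cases ts)
      case Nil then show ?thesis unfolding Qk_def by simp
    next
      case (Cons s ts')
      then have "\<forall>s'\<in>set ts'. lmin s < lmin s'" using m a unfolding minfirst_ordered_def by blast
      then show ?thesis using Cons unfolding Qk_def ltk_def keyf_def by simp
    qed
  qed
qed

lemma io_eq: "io_forests R n k = forests 1 R {1..n} k"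
  unfolding io_forests_def lo_eq forests_def valid_def using qok1 qok0 by auto

lemma mo_eq: "mo_forests R n k = forests 2 R {1..n} k"
  unfolding mo_forests_def lo_eq forests_def valid_def using qok2 qok0 by auto

lemma LS_card_le:
  assumes Ls: "Ls \<in> LS \<kappa> lt R X k" and fin: "finite X"
  shows "k \<le> card X"
proof -
  note P = LS_props[OF Ls]
  have "inj_on hd Ls"
  proof (rule inj_onI)
    fix l l' assume a: "l \<in> Ls" "l' \<in> Ls" "hd l = hd l'"
    show "l = l'"
    proof (rule ccontr)
      assume "l \<noteq> l'"
      then have "set l \<inter> set l' = {}" using P(4) a by blast
      moreover have "hd l \<in> set l" "hd l' \<in> set l'" using P(3) a(1,2) by auto
      ultimately show False using a(3) by auto
    qed
  qed
  moreover have "hd ` Ls \<subseteq> X"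
  proof
    fix x assume "x \<in> hd ` Ls"
    then obtain l where l: "l \<in> Ls" "x = hd l" by blast
    then have "x \<in> set l" using P(3) by auto
    then show "x \<in> X" using P(5) l(1) by blast
  qed
  ultimately have "card Ls \<le> card X" using card_inj_on_le fin by blast
  then show ?thesis using P(2) by simp
qed

lemma LS_one_empty:
  assumes "1 \<notin> R"
  shows "LS \<kappa> lt R {1::nat} k = {}"
proof (rule equals0I)
  fix Ls assume Ls: "Ls \<in> LS \<kappa> lt R {1::nat} k"
  note P = LS_props[OF Ls]
  have "(1::nat) \<in> (\<Union>l\<in>Ls. set l)" using P(5) by simp
  then obtain l where l: "l \<in> Ls" "1 \<in> set l" by blast
  have "set l \<subseteq> {1}" using P(5) l(1) by blast
  then have "set l = {1}" using l(2) by blast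
  then have "length l = 1" using P(3)[OF l(1)] distinct_card[of l] by simp
  then show False using P(3)[OF l(1)] assms by simp
qed

lemma kappa_result:
  fixes \<kappa> :: nat and R :: "nat set"
  defines "A \<equiv> (\<lambda>n k. real (card (LS \<kappa> (<) R {1..n} k)))"
  shows "(mat_invertible A \<longleftrightarrow> 1 \<in> R)
    \<and> (1 \<in> R \<longrightarrow> (\<forall>B n k. is_inverse_mat A B \<longrightarrow> 1 \<le> n \<longrightarrow> 1 \<le> k \<longrightarrow>
          B n k = (-1) ^ (n - k) * even_minus_odd (forests \<kappa> R {1..n} k)))"
proof -
  define C where "C = (\<lambda>n k. (-1::real) ^ (n - k) * even_minus_odd (forests \<kappa> R {1..n} k))"
  have lA: "lower_tri A" unfolding lower_tri_def A_def
  proof (intro allI impI)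
    fix n k :: nat assume "1 \<le> n" "n < k"
    have "LS \<kappa> (<) R {1..n} k = {}" using LS_card_le[of _ \<kappa> "(<)" R "{1..n}" k] \<open>n < k\<close> by force
    then show "real (card (LS \<kappa> (<) R {1..n} k)) = 0" by simp
  qed
  have lC: "lower_tri C" unfolding lower_tri_def C_def
  proof (intro allI impI)
    fix n k :: nat assume "1 \<le> n" "n < k"
    have "forests \<kappa> R {1..n} k = {}" using forest_card_le[of _ \<kappa> R "{1..n}" k] \<open>n < k\<close> by force
    then show "(-1::real) ^ (n - k) * even_minus_odd (forests \<kappa> R {1..n} k) = 0"
      unfolding even_minus_odd_def by simp
  qed
  have L: "mm C A n k = (if n = k then 1 else 0)" if R1: "1 \<in> R" and "1 \<le> n" "1 \<le> k" for n k
  proof -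
    have "mm C A n k = (\<Sum>j=1..n. ((-1::real) ^ (n - j) * even_minus_odd (forests \<kappa> R {1..n} j))
            * real (card (LS \<kappa> (<) R {1..j} k)))"
      unfolding mm_def C_def A_def by simp
    then show ?thesis using main_comb[OF R1 \<open>1 \<le> n\<close>] by simp
  qed
  have inv: "is_inverse_mat A C" if "1 \<in> R"
    by (rule left_inv_is_inverse[OF lA lC]) (use L that in auto)
  have noinv: "\<not> mat_invertible A" if "1 \<notin> R"
  proof
    assume "mat_invertible A"
    then obtain B where B: "is_inverse_mat A B" unfolding mat_invertible_def by blast
    then have "(\<Sum>j=1..1. A 1 j * B j 1) = 1" unfolding is_inverse_mat_def by auto
    moreover have "A 1 1 = 0" unfolding A_def using LS_one_empty[OF that] by simp
    ultimately show False by simp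
  qed
  show ?thesis
  proof (intro conjI impI allI)
    show "mat_invertible A \<longleftrightarrow> 1 \<in> R" using inv noinv unfolding mat_invertible_def by blast
  next
    fix B :: "nat \<Rightarrow> nat \<Rightarrow> real" and n k :: nat assume "1 \<in> R" "is_inverse_mat A B" "1 \<le> n" "1 \<le> k"
    then show "B n k = (-1) ^ (n - k) * even_minus_odd (forests \<kappa> R {1..n} k)"
      using inverse_unique[OF _ lC L] unfolding C_def by blast
  qed
qed

theorem theorem3p1:
  fixes R :: "nat set"
  assumes "0 \<notin> R"
  shows "(mat_invertible (\<lambda>n k. real (stirling2_R R n k)) \<longleftrightarrow> 1 \<in> R)
       \<and> (mat_invertible (\<lambda>n k. real (stirling1_R R n k)) \<longleftrightarrow> 1 \<in> R)
       \<and> (mat_invertible (\<lambda>n k. real (lah_R R n k)) \<longleftrightarrow> 1 \<in> R)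
       \<and> (1 \<in> R \<longrightarrow>
           (\<forall>B n k. is_inverse_mat (\<lambda>n k. real (stirling2_R R n k)) B \<longrightarrow> 1 \<le> n \<longrightarrow> 1 \<le> k \<longrightarrow>
              B n k = (-1) ^ (n - k) * even_minus_odd (io_forests R n k))
         \<and> (\<forall>B n k. is_inverse_mat (\<lambda>n k. real (stirling1_R R n k)) B \<longrightarrow> 1 \<le> n \<longrightarrow> 1 \<le> k \<longrightarrow>
              B n k = (-1) ^ (n - k) * even_minus_odd (mo_forests R n k))
         \<and> (\<forall>B n k. is_inverse_mat (\<lambda>n k. real (lah_R R n k)) B \<longrightarrow> 1 \<le> n \<longrightarrow> 1 \<le> k \<longrightarrow>
              B n k = (-1) ^ (n - k) * even_minus_odd (lo_forests R n k)))"
proof -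
  have e2: "(\<lambda>n k. real (stirling2_R R n k)) = (\<lambda>n k. real (card (LS 1 (<) R {1..n} k)))"
    by (simp add: stirling2_LS)
  have e1: "(\<lambda>n k. real (stirling1_R R n k)) = (\<lambda>n k. real (card (LS 2 (<) R {1..n} k)))"
    by (simp add: stirling1_LS)
  have e0: "(\<lambda>n k. real (lah_R R n k)) = (\<lambda>n k. real (card (LS 0 (<) R {1..n} k)))"
    by (simp add: lah_LS)
  have f: "io_forests R n k = forests 1 R {1..n} k" "mo_forests R n k = forests 2 R {1..n} k"
    "lo_forests R n k = forests 0 R {1..n} k" for n k
    by (rule io_eq, rule mo_eq, rule lo_eq)
  show ?thesis unfolding e0 e1 e2 f
    using kappa_result[of 0 R] kappa_result[of 1 R] kappa_result[of 2 R] by blast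
qed


end
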